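(* Let $X \in 2^\omega$ be a 2-generic real. Then $X' \not\leq_{tt} X \oplus 0'$.
   Context: Reals are elements of Cantor space $2^\omega$, identified with subsets of $\omega$. For $X\in 2^\omega$ and $l\in\omega$, $X\upharpoonright l$ is the initial segment of $X$ of length $l$. A real $X$ is $n$-generic if for every $\Sigma^0_n$ set $S$ of finite binary strings, either there is $l$ with $X\upharpoonright l \in S$, or there is $l$ such that no string $\tau \supseteq X\upharpoonright l$ lies in $S$. A Turing functional $\Phi$ is a truth-table reduction if there is a computable $f:\omega\to\omega$ such that for every $n$ and every string $\sigma$ of length $f(n)$, $\Phi^\sigma(n)$ converges; $A \leq_{tt} B$ means $\Phi(B)=A$ for some truth-table reduction $\Phi$. $X' = \{e : \{e\}^X(e)\downarrow\}$ is the Turing jump of $X$, $0'$ is the halting set, and $A\oplus B$ is the join $\{2n : n\in A\}\cup\{2n+1 : n \in B\}$. *)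

theory Defs
  imports "HOL-Library.Nat_Bijection" "HOL-Library.Sublist"
begin

text \<open>An orc is a partial
  0/1-valued function; a real X is the total orc, a finite string sigma is the orc
  defined exactly below its length (queries beyond the length diverge).\<close>

datatype rf =
    RZero | RSucc | RFst | RSnd | ROrc
  | RComp rf rf
  | RPair rf rf
  | RRec rf rf
  | RMu rf

type_synonym orc = "nat \<Rightarrow> bool option"

inductive ev :: "orc \<Rightarrow> rf \<Rightarrow> nat \<Rightarrow> nat \<Rightarrow> bool" for Q where
  evZ: "ev Q RZero x 0"
| evS: "ev Q RSucc x (Suc x)"
| evF: "ev Q RFst x (fst (prod_decode x))"
| evN: "ev Q RSnd x (snd (prod_decode x))"
| evO: "Q x = Some b \<Longrightarrow> ev Q ROrc x (of_bool b)"
| evC: "ev Q g x y \<Longrightarrow> ev Q f y z \<Longrightarrow> ev Q (RComp f g) x z"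
| evP: "ev Q f x y \<Longrightarrow> ev Q g x z \<Longrightarrow> ev Q (RPair f g) x (prod_encode (y, z))"
| evR0: "prod_decode z = (x, 0) \<Longrightarrow> ev Q f x y \<Longrightarrow> ev Q (RRec f g) z y"
| evRS: "prod_decode z = (x, Suc n) \<Longrightarrow> ev Q (RRec f g) (prod_encode (x, n)) r
         \<Longrightarrow> ev Q g (prod_encode (x, prod_encode (n, r))) y \<Longrightarrow> ev Q (RRec f g) z y"
| evM: "ev Q f (prod_encode (x, n)) 0 \<Longrightarrow> (\<forall>m<n. \<exists>k. ev Q f (prod_encode (x, m)) (Suc k))
         \<Longrightarrow> ev Q (RMu f) x n"

primrec code :: "rf \<Rightarrow> nat" where
  "code RZero = 0"
| "code RSucc = 1"
| "code RFst = 2"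
| "code RSnd = 3"
| "code ROrc = 4"
| "code (RComp f g) = 5 + 9 * prod_encode (code f, code g)"
| "code (RPair f g) = 6 + 9 * prod_encode (code f, code g)"
| "code (RRec f g) = 7 + 9 * prod_encode (code f, code g)"
| "code (RMu f) = 8 + 9 * code f"

definition decode :: "nat \<Rightarrow> rf" where
  "decode e = (if e \<in> range code then inv code e else RZero)"

definition phi :: "nat \<Rightarrow> orc \<Rightarrow> nat \<Rightarrow> nat \<Rightarrow> bool" where
  "phi e Q x y = ev Q (decode e) x y"

definition set_orc :: "nat set \<Rightarrow> orc" where
  "set_orc X = (\<lambda>n. Some (n \<in> X))"

definition str_orc :: "bool list \<Rightarrow> orc" where
  "str_orc \<sigma> = (\<lambda>n. if n < length \<sigma> then Some (\<sigma> ! n) else None)"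

definition empty_orc :: orc where
  "empty_orc = (\<lambda>_. None)"

definition computable_fun :: "(nat \<Rightarrow> nat) \<Rightarrow> bool" where
  "computable_fun f \<longleftrightarrow> (\<exists>e. \<forall>n. phi e empty_orc n (f n))"

definition decidable :: "nat set \<Rightarrow> bool" where
  "decidable A \<longleftrightarrow> (\<exists>e. \<forall>n. phi e empty_orc n (if n \<in> A then 1 else 0))"

definition tt_functional :: "nat \<Rightarrow> bool" where
  "tt_functional e \<longleftrightarrow> (\<exists>f. computable_fun f \<and>
      (\<forall>n \<sigma>. length \<sigma> = f n \<longrightarrow> (\<exists>y. phi e (str_orc \<sigma>) n y)))"

definition computes :: "nat \<Rightarrow> nat set \<Rightarrow> nat set \<Rightarrow> bool" where
  "computes e B A \<longleftrightarrow> (\<forall>n. phi e (set_orc B) n (if n \<in> A then 1 else 0))"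

definition tt_le :: "nat set \<Rightarrow> nat set \<Rightarrow> bool" where
  "tt_le A B \<longleftrightarrow> (\<exists>e. tt_functional e \<and> computes e B A)"

definition jump :: "nat set \<Rightarrow> nat set" where
  "jump X = {e. \<exists>y. phi e (set_orc X) e y}"

definition halting :: "nat set" where
  "halting = {e. \<exists>y. phi e empty_orc e y}"

definition join :: "nat set \<Rightarrow> nat set \<Rightarrow> nat set" where
  "join A B = {2 * n | n. n \<in> A} \<union> {2 * n + 1 | n. n \<in> B}"

fun Sigma :: "nat \<Rightarrow> nat set \<Rightarrow> bool" where
  "Sigma 0 A = decidable A"
| "Sigma (Suc n) A = (\<exists>R. Sigma n R \<and> A = {m. \<exists>k. prod_encode (m, k) \<notin> R})"

definition str_code :: "bool list \<Rightarrow> nat" where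
  "str_code \<sigma> = list_encode (map of_bool \<sigma>)"

definition Sigma_strings :: "nat \<Rightarrow> bool list set \<Rightarrow> bool" where
  "Sigma_strings n S \<longleftrightarrow> (\<exists>A. Sigma n A \<and> S = {\<sigma>. str_code \<sigma> \<in> A})"

definition restr :: "nat set \<Rightarrow> nat \<Rightarrow> bool list" where
  "restr X l = map (\<lambda>i. i \<in> X) [0..<l]"

definition generic :: "nat \<Rightarrow> nat set \<Rightarrow> bool" where
  "generic n X \<longleftrightarrow> (\<forall>S. Sigma_strings n S \<longrightarrow>
      (\<exists>l. restr X l \<in> S) \<or> (\<exists>l. \<forall>\<tau>. prefix (restr X l) \<tau> \<longrightarrow> \<tau> \<notin> S))"

end

theory Submission
  imports Defs
begin


inductive_cases evZE: "ev Q RZero x y"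
inductive_cases evSE: "ev Q RSucc x y"
inductive_cases evFE: "ev Q RFst x y"
inductive_cases evNE: "ev Q RSnd x y"
inductive_cases evOE: "ev Q ROrc x y"
inductive_cases evCE: "ev Q (RComp f g) x y"
inductive_cases evPE: "ev Q (RPair f g) x y"
inductive_cases evRE: "ev Q (RRec f g) x y"
inductive_cases evME: "ev Q (RMu f) x y"

lemma ev_mono:
  assumes "ev Q P x y" "\<And>n b. Q n = Some b \<Longrightarrow> Q' n = Some b"
  shows "ev Q' P x y"
  using assms(1)
proof (induction rule: ev.induct)
  case (evM f x n)
  then show ?case by (blast intro: ev.evM)
next
  case (evO x b) 
  from evO assms(2) have "Q' x = Some b" by blast
  then show ?case by (rule ev.evO)
qed (auto intro: ev.intros)

lemma ev_det:
  assumes "ev Q P x y" "ev Q P x y'"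
  shows "y = y'"
  using assms
proof (induction arbitrary: y' rule: ev.induct)
  case (evZ x) then show ?case by (blast elim: evZE) 
next
  case (evS x) then show ?case by (blast elim: evSE) 
next
  case (evF x) then show ?case by (blast elim: evFE) 
next
  case (evN x) then show ?case by (blast elim: evNE) 
next
  case (evO x b) then show ?case by (metis evOE option.inject) 
next
  case (evC g x y f z) 
  from evC.prems show ?case by (rule evCE) (use evC.IH in blast)
next
  case (evP f x y g z) 
  from evP.prems show ?case by (rule evPE) (use evP.IH in blast)
next
  case (evR0 z x f y g)
  from evR0.prems show ?case
  proof (rule evRE)
    fix x' assume "prod_decode z = (x', 0)" "ev Q f x' y'"
    then show ?thesis using evR0.hyps(1) evR0.IH by simp
  next
    fix x' n r assume "prod_decode z = (x', Suc n)"
    then show ?thesis using evR0.hyps(1) by simp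
  qed
next
  case (evRS z x n f g r y)
  from evRS.prems show ?case
  proof (rule evRE)
    fix x' assume "prod_decode z = (x', 0)"
    then show ?thesis using evRS.hyps(1) by simp
  next
    fix x' n' r' assume h: "prod_decode z = (x', Suc n')" "ev Q (RRec f g) (prod_encode (x', n')) r'"
       "ev Q g (prod_encode (x', prod_encode (n', r'))) y'"
    then have e: "x' = x" "n' = n" using evRS.hyps(1) by auto
    with h evRS.IH(1) have "r' = r" by blast
    with h e evRS.IH(2) show ?thesis by blast
  qed
next
  case (evM f x n)
  from evM.prems show ?case
  proof (rule evME)
    assume a: "ev Q f (prod_encode (x, y')) 0" "\<forall>m<y'. \<exists>k. ev Q f (prod_encode (x, m)) (Suc k)"
    show ?thesis
    proof (rule ccontr)
      assume "n \<noteq> y'"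
      then consider "n < y'" | "y' < n" by arith
      then show False
      proof cases
        case 1
        with a obtain k where "ev Q f (prod_encode (x, n)) (Suc k)" by blast
        with evM.IH(1) show False by fastforce
      next
        case 2
        from 2 evM.IH(2) obtain k where "ev Q f (prod_encode (x, y')) (Suc k)"
          "\<And>z. ev Q f (prod_encode (x, y')) z \<Longrightarrow> Suc k = z" by blast
        with a show False by fastforce
      qed
    qed
  qed
qed


lemma pd_fst_le: "fst (prod_decode k) \<le> k"
  by (metis le_prod_encode_1 prod.collapse prod_decode_inverse)
lemma pd_snd_le: "snd (prod_decode k) \<le> k"
  by (metis le_prod_encode_2 prod.collapse prod_decode_inverse)

function dec :: "nat \<Rightarrow> rf" where
  "dec p = (if p = 0 then RZero else if p = 1 then RSucc else if p = 2 then RFst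
     else if p = 3 then RSnd else if p = 4 then ROrc
     else if p mod 9 = 5 then RComp (dec (fst (prod_decode (p div 9)))) (dec (snd (prod_decode (p div 9))))
     else if p mod 9 = 6 then RPair (dec (fst (prod_decode (p div 9)))) (dec (snd (prod_decode (p div 9))))
     else if p mod 9 = 7 then RRec (dec (fst (prod_decode (p div 9)))) (dec (snd (prod_decode (p div 9))))
     else if p mod 9 = 8 then RMu (dec (p div 9)) else RZero)"
  by auto
lemma div9_lt: "0 < (p::nat) \<Longrightarrow> p div 9 < p" by simp
lemma pdf_lt: "0 < (p::nat) \<Longrightarrow> fst (prod_decode (p div 9)) < p"
  using pd_fst_le[of "p div 9"] div9_lt[of p] by linarith
lemma pds_lt: "0 < (p::nat) \<Longrightarrow> snd (prod_decode (p div 9)) < p"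
  using pd_snd_le[of "p div 9"] div9_lt[of p] by linarith
termination
  by (relation "measure id") (simp_all add: pdf_lt pds_lt div9_lt)

lemma dec_code: "dec (code P) = P"
  by (induction P) (simp_all)

lemma code_inj: "code P = code P' \<Longrightarrow> P = P'"
  by (metis dec_code)

lemma inj_code: "inj code" by (auto intro: injI code_inj)

lemma decode_code[simp]: "decode (code P) = P"
  by (simp add: decode_def inj_code)

lemma decode_notcode: "p \<notin> range code \<Longrightarrow> decode p = RZero"
  by (simp add: decode_def)



definition comput :: "(nat \<Rightarrow> nat) \<Rightarrow> bool" where
  "comput h \<longleftrightarrow> (\<exists>P. \<forall>Q x. ev Q P x (h x))"

lemma computI: "(\<And>Q x. ev Q P x (h x)) \<Longrightarrow> comput h"
  unfolding comput_def by blast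

lemma comput_cong: "comput h \<Longrightarrow> (\<And>x. h x = h' x) \<Longrightarrow> comput h'"
  unfolding comput_def by (metis)

lemma t_id[intro!]: "comput (\<lambda>x. x)"
proof (rule computI[of "RPair RFst RSnd"])
  fix Q x
  have "ev Q (RPair RFst RSnd) x (prod_encode (fst (prod_decode x), snd (prod_decode x)))"
    by (intro ev.intros)
  then show "ev Q (RPair RFst RSnd) x x" by (simp add: prod_decode_inverse)
qed

lemma t_comp: "comput f \<Longrightarrow> comput g \<Longrightarrow> comput (\<lambda>x. f (g x))"
  unfolding comput_def by (blast intro: ev.evC)

lemma t_Suc[intro!]: "comput a \<Longrightarrow> comput (\<lambda>x. Suc (a x))"
  using t_comp[of Suc a] by (auto simp: comput_def intro: ev.intros)

lemma t_fst[intro!]: "comput a \<Longrightarrow> comput (\<lambda>x. fst (prod_decode (a x)))"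
  using t_comp[of "\<lambda>x. fst (prod_decode x)" a] by (auto simp: comput_def intro: ev.intros)

lemma t_snd[intro!]: "comput a \<Longrightarrow> comput (\<lambda>x. snd (prod_decode (a x)))"
  using t_comp[of "\<lambda>x. snd (prod_decode x)" a] by (auto simp: comput_def intro: ev.intros)

lemma t_pair[intro!]: "comput a \<Longrightarrow> comput b \<Longrightarrow> comput (\<lambda>x. prod_encode (a x, b x))"
  unfolding comput_def by (blast intro: ev.evP)

lemma t_zero: "comput (\<lambda>x. 0)"
  by (rule computI[of RZero]) (rule ev.evZ)

lemma t_const[intro!]: "comput (\<lambda>x. c)"
proof (induction c)
  case 0 then show ?case by (rule t_zero)
next
  case (Suc c) then show ?case by (rule t_Suc)
qed

fun precf :: "(nat \<Rightarrow> nat) \<Rightarrow> (nat \<Rightarrow> nat) \<Rightarrow> nat \<Rightarrow> nat \<Rightarrow> nat" where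
  "precf f g x 0 = f x"
| "precf f g x (Suc n) = g (prod_encode (x, prod_encode (n, precf f g x n)))"

lemma ev_rec:
  assumes "\<And>x. ev Q Pf x (f x)" "\<And>x. ev Q Pg x (g x)"
  shows "ev Q (RRec Pf Pg) (prod_encode (x, n)) (precf f g x n)"
proof (induction n)
  case 0 then show ?case by (auto intro: ev.evR0 assms)
next
  case (Suc n)
  show ?case by (rule ev.evRS[OF _ Suc]) (auto intro: assms)
qed

lemma t_prec: "comput f \<Longrightarrow> comput g \<Longrightarrow> comput a \<Longrightarrow> comput b \<Longrightarrow> comput (\<lambda>x. precf f g (a x) (b x))"
proof -
  assume "comput f" "comput g" "comput a" "comput b"
  then obtain Pf Pg Pa Pb where h: "\<And>Q x. ev Q Pf x (f x)" "\<And>Q x. ev Q Pg x (g x)"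
     "\<And>Q x. ev Q Pa x (a x)" "\<And>Q x. ev Q Pb x (b x)" unfolding comput_def by metis
  show ?thesis
  proof (rule computI[of "RComp (RRec Pf Pg) (RPair Pa Pb)"])
    fix Q x show "ev Q (RComp (RRec Pf Pg) (RPair Pa Pb)) x (precf f g (a x) (b x))"
      by (intro ev.evC[OF ev.evP[OF h(3) h(4)]] ev_rec h)
  qed
qed

lemma sel_simps[simp]: "fst (prod_decode (prod_encode (a, b))) = a" "snd (prod_decode (prod_encode (a, b))) = b"
  by simp_all

lemma prec_add: "precf (\<lambda>x. x) (\<lambda>w. Suc (snd (prod_decode (snd (prod_decode w))))) x n = x + n"
  by (induction n) auto

lemma t_add[intro!]: "comput a \<Longrightarrow> comput b \<Longrightarrow> comput (\<lambda>x. a x + b x)"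
  by (rule comput_cong[OF t_prec[of "\<lambda>x. x" "\<lambda>w. Suc (snd (prod_decode (snd (prod_decode w))))" a b]])
     (auto simp: prec_add)

lemma prec_pred: "precf (\<lambda>x. 0) (\<lambda>w. fst (prod_decode (snd (prod_decode w)))) x n = n - 1"
  by (induction n) auto

lemma t_pred[intro!]: "comput a \<Longrightarrow> comput (\<lambda>x. a x - Suc 0)"
  by (rule comput_cong[OF t_prec[of "\<lambda>x. 0" "\<lambda>w. fst (prod_decode (snd (prod_decode w)))" "\<lambda>x. 0" a]])
     (auto simp: prec_pred)

lemma prec_sub: "precf (\<lambda>x. x) (\<lambda>w. snd (prod_decode (snd (prod_decode w))) - Suc 0) x n = x - n"
  by (induction n) auto

lemma t_sub[intro!]: "comput a \<Longrightarrow> comput b \<Longrightarrow> comput (\<lambda>x. a x - b x)"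
  by (rule comput_cong[OF t_prec[of "\<lambda>x. x" "\<lambda>w. snd (prod_decode (snd (prod_decode w))) - Suc 0" a b]])
     (auto simp: prec_sub)

lemma prec_mult: "precf (\<lambda>x. 0) (\<lambda>w. snd (prod_decode (snd (prod_decode w))) + fst (prod_decode w)) x n = n * x"
  by (induction n) auto

lemma t_mult[intro!]: "comput a \<Longrightarrow> comput b \<Longrightarrow> comput (\<lambda>x. a x * b x)"
  by (rule comput_cong[OF t_prec[of "\<lambda>x. 0" "\<lambda>w. snd (prod_decode (snd (prod_decode w))) + fst (prod_decode w)" b a]])
     (auto simp: prec_mult)

lemma t_eq[intro!]: "comput a \<Longrightarrow> comput b \<Longrightarrow> comput (\<lambda>x. of_bool (a x = b x))"
  by (rule comput_cong[of "\<lambda>x. 1 - ((a x - b x) + (b x - a x))"]) auto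

lemma t_less[intro!]: "comput a \<Longrightarrow> comput b \<Longrightarrow> comput (\<lambda>x. of_bool (a x < b x))"
  by (rule comput_cong[of "\<lambda>x. 1 - (1 - (b x - a x))"]) auto

lemma t_le[intro!]: "comput a \<Longrightarrow> comput b \<Longrightarrow> comput (\<lambda>x. of_bool (a x \<le> b x))"
  by (rule comput_cong[of "\<lambda>x. 1 - (a x - b x)"]) auto

lemma t_not[intro!]: "comput (\<lambda>x. of_bool (P x)) \<Longrightarrow> comput (\<lambda>x. of_bool (\<not> P x))"
  by (rule comput_cong[of "\<lambda>x. 1 - of_bool (P x)"]) auto

lemma t_and[intro!]: "comput (\<lambda>x. of_bool (P x)) \<Longrightarrow> comput (\<lambda>x. of_bool (R x)) \<Longrightarrow> comput (\<lambda>x. of_bool (P x \<and> R x))"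
  by (rule comput_cong[of "\<lambda>x. of_bool (P x) * of_bool (R x)"]) auto

lemma t_or[intro!]: "comput (\<lambda>x. of_bool (P x)) \<Longrightarrow> comput (\<lambda>x. of_bool (R x)) \<Longrightarrow> comput (\<lambda>x. of_bool (P x \<or> R x))"
proof -
  assume "comput (\<lambda>x. of_bool (P x))" "comput (\<lambda>x. of_bool (R x))"
  then have "comput (\<lambda>x. of_bool (\<not> (\<not> P x \<and> \<not> R x)))" by (intro t_not t_and)
  then show ?thesis by (rule comput_cong) auto
qed

lemma t_imp[intro!]: "comput (\<lambda>x. of_bool (P x)) \<Longrightarrow> comput (\<lambda>x. of_bool (R x)) \<Longrightarrow> comput (\<lambda>x. of_bool (P x \<longrightarrow> R x))"
proof -
  assume "comput (\<lambda>x. of_bool (P x))" "comput (\<lambda>x. of_bool (R x))"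
  then have "comput (\<lambda>x. of_bool (\<not> P x \<or> R x))" by (intro t_not t_or)
  then show ?thesis by (rule comput_cong) auto
qed

lemma prec_if: "precf (\<lambda>x. snd (prod_decode x)) (\<lambda>w. fst (prod_decode (fst (prod_decode w)))) (prod_encode (a, b)) n
   = (if n = 0 then b else a)"
  by (cases n) auto

lemma t_if[intro!]: "comput (\<lambda>x. of_bool (P x)) \<Longrightarrow> comput a \<Longrightarrow> comput b \<Longrightarrow> comput (\<lambda>x. if P x then a x else b x)"
  by (rule comput_cong[OF t_prec[of "\<lambda>x. snd (prod_decode x)" "\<lambda>w. fst (prod_decode (fst (prod_decode w)))"
       "\<lambda>x. prod_encode (a x, b x)" "\<lambda>x. of_bool (P x)"]]) (auto simp: prec_if)

lemma prec_iter: "precf (\<lambda>x. x) (\<lambda>w. f (snd (prod_decode (snd (prod_decode w))))) x n = (f ^^ n) x"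
  by (induction n) auto

lemma t_iter[intro!]: "comput f \<Longrightarrow> comput a \<Longrightarrow> comput b \<Longrightarrow> comput (\<lambda>x. (f ^^ (b x)) (a x))"
  by (rule comput_cong[OF t_prec[of "\<lambda>x. x" "\<lambda>w. f (snd (prod_decode (snd (prod_decode w))))" a b]])
     (auto simp: prec_iter intro: t_comp)

lemma prec_ex: "precf (\<lambda>x. 0) (\<lambda>w. of_bool (snd (prod_decode (snd (prod_decode w))) \<noteq> 0 \<or>
      P (fst (prod_decode w)) (fst (prod_decode (snd (prod_decode w)))))) x n = of_bool (\<exists>j<n. P x j)"
  by (induction n) (auto simp: less_Suc_eq)

lemma t_bex[intro!]: "comput (\<lambda>z. of_bool (P (fst (prod_decode z)) (snd (prod_decode z)))) \<Longrightarrow> comput n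
   \<Longrightarrow> comput (\<lambda>x. of_bool (\<exists>j<n x. P x j))"
proof -
  assume hP: "comput (\<lambda>z. of_bool (P (fst (prod_decode z)) (snd (prod_decode z))))" and hn: "comput n"
  let ?g = "\<lambda>w. of_bool (snd (prod_decode (snd (prod_decode w))) \<noteq> 0 \<or>
      P (fst (prod_decode w)) (fst (prod_decode (snd (prod_decode w)))))"
  have "comput (\<lambda>w. of_bool (P (fst (prod_decode (prod_encode (fst (prod_decode w), fst (prod_decode (snd (prod_decode w)))))))
           (snd (prod_decode (prod_encode (fst (prod_decode w), fst (prod_decode (snd (prod_decode w)))))))))"
    by (rule t_comp[OF hP]) auto
  then have "comput (\<lambda>w. of_bool (P (fst (prod_decode w)) (fst (prod_decode (snd (prod_decode w))))))"
    by simp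
  then have "comput ?g" by (intro t_or t_not t_eq t_snd t_const t_id)
  then have "comput (\<lambda>x. precf (\<lambda>x. 0) ?g x (n x))"
    using t_prec[of "\<lambda>x. 0" ?g "\<lambda>x. x" n] hn by blast
  then show ?thesis
    by (rule comput_cong) (simp only: prec_ex)
qed

lemma t_ball[intro!]: "comput (\<lambda>z. of_bool (P (fst (prod_decode z)) (snd (prod_decode z)))) \<Longrightarrow> comput n
   \<Longrightarrow> comput (\<lambda>x. of_bool (\<forall>j<n x. P x j))"
proof -
  assume "comput (\<lambda>z. of_bool (P (fst (prod_decode z)) (snd (prod_decode z))))" "comput n"
  then have "comput (\<lambda>x. of_bool (\<not> (\<exists>j<n x. \<not> P x j)))" by (intro t_not t_bex) auto
  then show ?thesis by (rule comput_cong) auto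
qed

definition dmstep :: "nat \<Rightarrow> nat" where
  "dmstep s = (if snd (prod_decode s) = 8 then prod_encode (Suc (fst (prod_decode s)), 0)
        else prod_encode (fst (prod_decode s), Suc (snd (prod_decode s))))"

lemma t_dmstep: "comput dmstep"
  unfolding dmstep_def by (intro t_if t_eq t_pair t_Suc t_fst t_snd t_const t_id)

lemma dm9_step: "(dmstep ^^ n) (prod_encode (0, 0)) = prod_encode (n div 9, n mod 9)"
proof (induction n)
  case 0 then show ?case by simp
next
  case (Suc n)
  have "(dmstep ^^ Suc n) (prod_encode (0, 0)) = dmstep (prod_encode (n div 9, n mod 9))"
    using Suc by simp
  also have "\<dots> = prod_encode (Suc n div 9, Suc n mod 9)"
    unfolding dmstep_def by (cases "n mod 9 = 8") (simp_all add: div_Suc mod_Suc del: mod_Suc_eq div_Suc_eq_div_add3)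
  finally show ?case .
qed

lemma t_dm9: "comput (\<lambda>x. prod_encode (x div 9, x mod 9))"
  by (rule comput_cong[OF t_iter[of dmstep "\<lambda>x. prod_encode (0,0)" "\<lambda>x. x", OF t_dmstep t_const t_id]]) (simp add: dm9_step)

lemma t_div9[intro!]: "comput a \<Longrightarrow> comput (\<lambda>x. a x div 9)"
  using t_comp[OF t_fst[OF t_dm9]] by simp

lemma t_mod9[intro!]: "comput a \<Longrightarrow> comput (\<lambda>x. a x mod 9)"
  using t_comp[OF t_snd[OF t_dm9]] by simp

lemma comput_decidable: "comput (\<lambda>x. of_bool (x \<in> A)) \<Longrightarrow> decidable A"
proof -
  assume "comput (\<lambda>x. of_bool (x \<in> A))"
  then obtain P where h: "\<And>Q x. ev Q P x (of_bool (x \<in> A))" unfolding comput_def by blast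
  have "\<forall>n. phi (code P) empty_orc n (if n \<in> A then 1 else 0)"
    unfolding phi_def decode_code using h[of empty_orc] by (simp add: of_bool_def)
  then show ?thesis unfolding decidable_def by blast
qed



section \<open>Encoded lists\<close>

definition ltl :: "nat \<Rightarrow> nat" where "ltl l = snd (prod_decode (l - 1))"
definition lhd :: "nat \<Rightarrow> nat" where "lhd l = fst (prod_decode (l - 1))"
definition lnth :: "nat \<Rightarrow> nat \<Rightarrow> nat" where "lnth l n = lhd ((ltl ^^ n) l)"
definition lvalid :: "nat \<Rightarrow> nat \<Rightarrow> bool" where "lvalid n l \<longleftrightarrow> (ltl ^^ n) l \<noteq> 0"

lemma pd0[simp]: "prod_decode 0 = (0, 0)"
proof -
  have "prod_encode (0, 0) = 0" by (simp add: prod_encode_def)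
  then show ?thesis by (metis prod_encode_inverse)
qed

lemma ltl_enc: "ltl (list_encode xs) = list_encode (tl xs)"
  by (cases xs) (simp_all add: ltl_def)

lemma ltl_iter: "(ltl ^^ n) (list_encode xs) = list_encode (drop n xs)"
proof (induction n)
  case 0 then show ?case by simp
next
  case (Suc n) then show ?case by (simp add: ltl_enc drop_Suc tl_drop)
qed

lemma lvalid_enc: "lvalid n (list_encode xs) \<longleftrightarrow> n < length xs"
proof -
  have "list_encode (drop n xs) \<noteq> 0 \<longleftrightarrow> drop n xs \<noteq> []"
    by (cases "drop n xs") auto
  then show ?thesis unfolding lvalid_def ltl_iter by auto
qed

lemma lnth_enc: "n < length xs \<Longrightarrow> lnth (list_encode xs) n = xs ! n"
proof -
  assume h: "n < length xs"
  have "drop n xs = xs ! n # drop (Suc n) xs" using Cons_nth_drop_Suc[OF h] by simp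
  then show ?thesis by (simp add: lnth_def ltl_iter lhd_def)
qed

lemma length_le_enc: "length xs \<le> list_encode xs"
proof (induction xs)
  case Nil then show ?case by simp
next
  case (Cons a xs) then show ?case using le_prod_encode_2[of "list_encode xs" a] by simp
qed

lemma t_ltl[intro!]: "comput a \<Longrightarrow> comput (\<lambda>x. ltl (a x))"
  unfolding ltl_def by (intro t_snd t_sub t_const)

lemma t_ltl0: "comput ltl"
  using t_ltl[OF t_id] by simp

lemma t_lnth[intro!]: "comput a \<Longrightarrow> comput b \<Longrightarrow> comput (\<lambda>x. lnth (a x) (b x))"
  unfolding lnth_def lhd_def by (intro t_fst t_sub t_iter t_ltl0 t_const)

lemma t_lvalid[intro!]: "comput a \<Longrightarrow> comput b \<Longrightarrow> comput (\<lambda>x. of_bool (lvalid (b x) (a x)))"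
  unfolding lvalid_def by (intro t_not t_eq t_iter t_ltl0 t_const)

definition orcn :: "nat \<Rightarrow> orc" where
  "orcn ob x = (if lvalid x ob then Some (lnth ob x \<noteq> 0) else None)"

section \<open>Certificates\<close>

definition etag :: "nat \<Rightarrow> nat" where "etag u = fst (prod_decode u)"
definition eo :: "nat \<Rightarrow> nat" where "eo u = fst (prod_decode (snd (prod_decode u)))"
definition ep :: "nat \<Rightarrow> nat" where "ep u = fst (prod_decode (snd (prod_decode (snd (prod_decode u)))))"
definition ea :: "nat \<Rightarrow> nat" where "ea u = fst (prod_decode (snd (prod_decode (snd (prod_decode (snd (prod_decode u)))))))"
definition ey :: "nat \<Rightarrow> nat" where "ey u = snd (prod_decode (snd (prod_decode (snd (prod_decode (snd (prod_decode u)))))))"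
definition icp :: "nat \<Rightarrow> nat" where "icp u = snd (prod_decode u)"
definition mkev :: "nat \<Rightarrow> nat \<Rightarrow> nat \<Rightarrow> nat \<Rightarrow> nat" where
  "mkev ob p x y = prod_encode (0, prod_encode (ob, prod_encode (p, prod_encode (x, y))))"
definition mkic :: "nat \<Rightarrow> nat" where "mkic p = prod_encode (1, p)"

lemma mkev_sel[simp]: "etag (mkev ob p x y) = 0" "eo (mkev ob p x y) = ob" "ep (mkev ob p x y) = p"
  "ea (mkev ob p x y) = x" "ey (mkev ob p x y) = y"
  by (simp_all add: mkev_def etag_def eo_def ep_def ea_def ey_def)

lemma mkic_sel[simp]: "etag (mkic p) = 1" "icp (mkic p) = p"
  by (simp_all add: mkic_def etag_def icp_def)

lemma t_etag[intro!]: "comput a \<Longrightarrow> comput (\<lambda>x. etag (a x))" unfolding etag_def by (intro t_fst)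
lemma t_eo[intro!]: "comput a \<Longrightarrow> comput (\<lambda>x. eo (a x))" unfolding eo_def by (intro t_fst t_snd)
lemma t_ep[intro!]: "comput a \<Longrightarrow> comput (\<lambda>x. ep (a x))" unfolding ep_def by (intro t_fst t_snd)
lemma t_ea[intro!]: "comput a \<Longrightarrow> comput (\<lambda>x. ea (a x))" unfolding ea_def by (intro t_fst t_snd)
lemma t_ey[intro!]: "comput a \<Longrightarrow> comput (\<lambda>x. ey (a x))" unfolding ey_def by (intro t_fst t_snd)
lemma t_icp[intro!]: "comput a \<Longrightarrow> comput (\<lambda>x. icp (a x))" unfolding icp_def by (intro t_snd)

definition EV :: "nat \<Rightarrow> nat \<Rightarrow> nat \<Rightarrow> nat \<Rightarrow> bool" where
  "EV u ob p x \<longleftrightarrow> etag u = 0 \<and> eo u = ob \<and> ep u = p \<and> ea u = x"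
definition IC :: "nat \<Rightarrow> nat \<Rightarrow> bool" where
  "IC u q \<longleftrightarrow> etag u = 1 \<and> icp u = q"

definition JG0 :: "((nat \<Rightarrow> bool) \<Rightarrow> bool) \<Rightarrow> nat \<Rightarrow> bool" where
"JG0 E e \<longleftrightarrow> (
   (ep e = 0 \<and> ey e = 0) \<or> (ep e = 1 \<and> ey e = Suc (ea e)) \<or> (ep e = 2 \<and> ey e = fst (prod_decode (ea e)))
 \<or> (ep e = 3 \<and> ey e = snd (prod_decode (ea e)))
 \<or> (ep e = 4 \<and> lvalid (ea e) (eo e) \<and> ey e = of_bool (lnth (eo e) (ea e) \<noteq> 0))
 \<or> (4 < ep e \<and> ep e mod 9 < 5 \<and> ey e = 0)
 \<or> (4 < ep e \<and> ep e mod 9 = 5 \<and> E (\<lambda>u. EV u (eo e) (snd (prod_decode (ep e div 9))) (ea e) \<and>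
        E (\<lambda>u'. EV u' (eo e) (fst (prod_decode (ep e div 9))) (ey u) \<and> ey u' = ey e)))
 \<or> (4 < ep e \<and> ep e mod 9 = 6 \<and> E (\<lambda>u. EV u (eo e) (fst (prod_decode (ep e div 9))) (ea e) \<and>
        E (\<lambda>u'. EV u' (eo e) (snd (prod_decode (ep e div 9))) (ea e) \<and> ey e = prod_encode (ey u, ey u'))))
 \<or> (4 < ep e \<and> ep e mod 9 = 7 \<and> snd (prod_decode (ea e)) = 0 \<and>
        E (\<lambda>u. EV u (eo e) (fst (prod_decode (ep e div 9))) (fst (prod_decode (ea e))) \<and> ey u = ey e))
 \<or> (4 < ep e \<and> ep e mod 9 = 7 \<and> snd (prod_decode (ea e)) \<noteq> 0 \<and>
        E (\<lambda>u. EV u (eo e) (ep e) (prod_encode (fst (prod_decode (ea e)), snd (prod_decode (ea e)) - 1)) \<and>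
          E (\<lambda>u'. EV u' (eo e) (snd (prod_decode (ep e div 9)))
                 (prod_encode (fst (prod_decode (ea e)), prod_encode (snd (prod_decode (ea e)) - 1, ey u))) \<and> ey u' = ey e)))
 \<or> (4 < ep e \<and> ep e mod 9 = 8 \<and> E (\<lambda>u. EV u (eo e) (ep e div 9) (prod_encode (ea e, ey e)) \<and> ey u = 0) \<and>
        (\<forall>m<ey e. E (\<lambda>u. EV u (eo e) (ep e div 9) (prod_encode (ea e, m)) \<and> ey u \<noteq> 0))))"

definition JG1 :: "((nat \<Rightarrow> bool) \<Rightarrow> bool) \<Rightarrow> nat \<Rightarrow> bool" where
"JG1 E e \<longleftrightarrow> (icp e < 5 \<or> (4 < icp e \<and> (icp e mod 9 = 5 \<or> icp e mod 9 = 6 \<or> icp e mod 9 = 7) \<and>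
       E (\<lambda>u. IC u (fst (prod_decode (icp e div 9)))) \<and> E (\<lambda>u. IC u (snd (prod_decode (icp e div 9)))))
     \<or> (4 < icp e \<and> icp e mod 9 = 8 \<and> E (\<lambda>u. IC u (icp e div 9))))"

definition JG :: "((nat \<Rightarrow> bool) \<Rightarrow> bool) \<Rightarrow> nat \<Rightarrow> bool" where
"JG E e \<longleftrightarrow> (etag e = 0 \<and> JG0 E e) \<or> (etag e = 1 \<and> JG1 E e)"

definition sem :: "nat \<Rightarrow> bool" where
  "sem u \<longleftrightarrow> (etag u = 0 \<longrightarrow> ev (orcn (eo u)) (dec (ep u)) (ea u) (ey u)) \<and> (etag u = 1 \<longrightarrow> icp u \<in> range code)"

lemma dec_base: "dec 0 = RZero" "dec 1 = RSucc" "dec 2 = RFst" "dec 3 = RSnd" "dec 4 = ROrc"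
  by (subst dec.simps; simp)+

lemma dec_5: "4 < p \<Longrightarrow> p mod 9 = 5 \<Longrightarrow> dec p = RComp (dec (fst (prod_decode (p div 9)))) (dec (snd (prod_decode (p div 9))))"
  by (subst dec.simps) simp
lemma dec_6: "4 < p \<Longrightarrow> p mod 9 = 6 \<Longrightarrow> dec p = RPair (dec (fst (prod_decode (p div 9)))) (dec (snd (prod_decode (p div 9))))"
  by (subst dec.simps) simp
lemma dec_7: "4 < p \<Longrightarrow> p mod 9 = 7 \<Longrightarrow> dec p = RRec (dec (fst (prod_decode (p div 9)))) (dec (snd (prod_decode (p div 9))))"
  by (subst dec.simps) simp
lemma dec_8: "4 < p \<Longrightarrow> p mod 9 = 8 \<Longrightarrow> dec p = RMu (dec (p div 9))"
  by (subst dec.simps) simp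
lemma dec_z: "4 < p \<Longrightarrow> p mod 9 < 5 \<Longrightarrow> dec p = RZero"
  by (subst dec.simps) simp

lemma p9: "p = (p mod 9) + 9 * (p div 9)" for p :: nat by simp



lemma EV_sem: "EV u ob p x \<Longrightarrow> sem u \<Longrightarrow> ev (orcn ob) (dec p) x (ey u)"
  by (simp add: EV_def sem_def)
lemma IC_sem: "IC u q \<Longrightarrow> sem u \<Longrightarrow> q \<in> range code"
  by (simp add: IC_def sem_def)

lemma JG_sound:
  assumes J: "JG E e" and H: "\<And>R. E R \<Longrightarrow> \<exists>u. R u \<and> sem u"
  shows "sem e"
proof -
  define ob p x y where "ob = eo e" "p = ep e" "x = ea e" "y = ey e"
  define a b where "a = fst (prod_decode (p div 9))" "b = snd (prod_decode (p div 9))"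
  have ev0: "ev (orcn ob) (dec p) x y" if t0: "etag e = 0"
  proof -
    from J t0 have D:
     "(p = 0 \<and> y = 0) \<or> (p = 1 \<and> y = Suc x) \<or> (p = 2 \<and> y = fst (prod_decode x))
 \<or> (p = 3 \<and> y = snd (prod_decode x))
 \<or> (p = 4 \<and> lvalid x ob \<and> y = of_bool (lnth ob x \<noteq> 0))
 \<or> (4 < p \<and> p mod 9 < 5 \<and> y = 0)
 \<or> (4 < p \<and> p mod 9 = 5 \<and> E (\<lambda>u. EV u ob b x \<and>
        E (\<lambda>u'. EV u' ob a (ey u) \<and> ey u' = y)))
 \<or> (4 < p \<and> p mod 9 = 6 \<and> E (\<lambda>u. EV u ob a x \<and>
        E (\<lambda>u'. EV u' ob b x \<and> y = prod_encode (ey u, ey u'))))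
 \<or> (4 < p \<and> p mod 9 = 7 \<and> snd (prod_decode x) = 0 \<and>
        E (\<lambda>u. EV u ob a (fst (prod_decode x)) \<and> ey u = y))
 \<or> (4 < p \<and> p mod 9 = 7 \<and> snd (prod_decode x) \<noteq> 0 \<and>
        E (\<lambda>u. EV u ob p (prod_encode (fst (prod_decode x), snd (prod_decode x) - 1)) \<and>
          E (\<lambda>u'. EV u' ob b
                 (prod_encode (fst (prod_decode x), prod_encode (snd (prod_decode x) - 1, ey u))) \<and> ey u' = y)))
 \<or> (4 < p \<and> p mod 9 = 8 \<and> E (\<lambda>u. EV u ob (p div 9) (prod_encode (x, y)) \<and> ey u = 0) \<and>
        (\<forall>m<y. E (\<lambda>u. EV u ob (p div 9) (prod_encode (x, m)) \<and> ey u \<noteq> 0)))"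
    proof -
      from J t0 have "JG0 E e" unfolding JG_def by simp
      then show ?thesis unfolding JG0_def ob_p_x_y_def a_b_def .
    qed
    then show ?thesis
    proof (elim disjE conjE)
      assume "p = 0" "y = 0" then show ?thesis by (simp add: dec_base ev.evZ)
    next
      assume "p = 1" "y = Suc x" then show ?thesis by (simp add: dec_base ev.evS)
    next
      assume "p = 2" "y = fst (prod_decode x)" then show ?thesis by (simp add: dec_base ev.evF)
    next
      assume "p = 3" "y = snd (prod_decode x)" then show ?thesis by (simp add: dec_base ev.evN)
    next
      assume "p = 4" "lvalid x ob" "y = of_bool (lnth ob x \<noteq> 0)"
      then show ?thesis by (simp add: dec_base ev.evO orcn_def)
    next
      assume "4 < p" "p mod 9 < 5" "y = 0" then show ?thesis by (simp add: dec_z ev.evZ)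
    next
      assume h: "4 < p" "p mod 9 = 5" "E (\<lambda>u. EV u ob b x \<and> E (\<lambda>u'. EV u' ob a (ey u) \<and> ey u' = y))"
      from H[OF h(3)] obtain u where u: "EV u ob b x" "E (\<lambda>u'. EV u' ob a (ey u) \<and> ey u' = y)" "sem u" by blast
      from H[OF u(2)] obtain u' where u': "EV u' ob a (ey u)" "ey u' = y" "sem u'" by blast
      have d: "dec p = RComp (dec a) (dec b)" using dec_5[OF h(1,2)] unfolding a_b_def .
      show ?thesis unfolding d using ev.evC[OF EV_sem[OF u(1) u(3)] EV_sem[OF u'(1) u'(3)]] u'(2) by simp
    next
      assume h: "4 < p" "p mod 9 = 6" "E (\<lambda>u. EV u ob a x \<and> E (\<lambda>u'. EV u' ob b x \<and> y = prod_encode (ey u, ey u')))"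
      from H[OF h(3)] obtain u where u: "EV u ob a x" "E (\<lambda>u'. EV u' ob b x \<and> y = prod_encode (ey u, ey u'))" "sem u" by blast
      from H[OF u(2)] obtain u' where u': "EV u' ob b x" "y = prod_encode (ey u, ey u')" "sem u'" by blast
      have d: "dec p = RPair (dec a) (dec b)" using dec_6[OF h(1,2)] unfolding a_b_def .
      show ?thesis unfolding d using ev.evP[OF EV_sem[OF u(1) u(3)] EV_sem[OF u'(1) u'(3)]] u'(2) by simp
    next
      assume h: "4 < p" "p mod 9 = 7" "snd (prod_decode x) = 0" "E (\<lambda>u. EV u ob a (fst (prod_decode x)) \<and> ey u = y)"
      from H[OF h(4)] obtain u where u: "EV u ob a (fst (prod_decode x))" "ey u = y" "sem u" by blast
      have pd: "prod_decode x = (fst (prod_decode x), 0)" using h(3) by (metis prod.collapse)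
      have d: "dec p = RRec (dec a) (dec b)" using dec_7[OF h(1,2)] unfolding a_b_def .
      show ?thesis unfolding d using ev.evR0[OF pd EV_sem[OF u(1) u(3)]] u(2) by simp
    next
      assume h: "4 < p" "p mod 9 = 7" "snd (prod_decode x) \<noteq> 0"
        "E (\<lambda>u. EV u ob p (prod_encode (fst (prod_decode x), snd (prod_decode x) - 1)) \<and>
          E (\<lambda>u'. EV u' ob b
                 (prod_encode (fst (prod_decode x), prod_encode (snd (prod_decode x) - 1, ey u))) \<and> ey u' = y))"
      from H[OF h(4)] obtain u where u: "EV u ob p (prod_encode (fst (prod_decode x), snd (prod_decode x) - 1))"
        "E (\<lambda>u'. EV u' ob b (prod_encode (fst (prod_decode x), prod_encode (snd (prod_decode x) - 1, ey u))) \<and> ey u' = y)"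
        "sem u" by blast
      from H[OF u(2)] obtain u' where u': "EV u' ob b (prod_encode (fst (prod_decode x), prod_encode (snd (prod_decode x) - 1, ey u)))"
        "ey u' = y" "sem u'" by blast
      have pd: "prod_decode x = (fst (prod_decode x), Suc (snd (prod_decode x) - 1))" using h(3) by simp
      have e1: "ev (orcn ob) (RRec (dec a) (dec b)) (prod_encode (fst (prod_decode x), snd (prod_decode x) - 1)) (ey u)"
        using EV_sem[OF u(1) u(3)] dec_7[OF h(1,2)] unfolding a_b_def by simp
      have e2: "ev (orcn ob) (dec b) (prod_encode (fst (prod_decode x), prod_encode (snd (prod_decode x) - 1, ey u))) y"
        using EV_sem[OF u'(1) u'(3)] u'(2) by simp
      show ?thesis using ev.evRS[OF pd e1 e2] dec_7[OF h(1,2)] unfolding a_b_def by simp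
    next
      assume h: "4 < p" "p mod 9 = 8" "E (\<lambda>u. EV u ob (p div 9) (prod_encode (x, y)) \<and> ey u = 0)"
        "\<forall>m<y. E (\<lambda>u. EV u ob (p div 9) (prod_encode (x, m)) \<and> ey u \<noteq> 0)"
      from H[OF h(3)] obtain u where u: "EV u ob (p div 9) (prod_encode (x, y))" "ey u = 0" "sem u" by blast
      have e1: "ev (orcn ob) (dec (p div 9)) (prod_encode (x, y)) 0" using EV_sem[OF u(1) u(3)] u(2) by simp
      have e2: "\<forall>m<y. \<exists>k. ev (orcn ob) (dec (p div 9)) (prod_encode (x, m)) (Suc k)"
      proof (intro allI impI)
        fix m assume "m < y"
        with h(4) have "E (\<lambda>u. EV u ob (p div 9) (prod_encode (x, m)) \<and> ey u \<noteq> 0)" by blast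
        from H[OF this] obtain u where u: "EV u ob (p div 9) (prod_encode (x, m))" "ey u \<noteq> 0" "sem u" by blast
        then show "\<exists>k. ev (orcn ob) (dec (p div 9)) (prod_encode (x, m)) (Suc k)"
          using EV_sem[OF u(1) u(3)] by (metis not0_implies_Suc)
      qed
      show ?thesis using ev.evM[OF e1 e2] dec_8[OF h(1,2)] by simp
    qed
  qed
  have ic: "icp e \<in> range code" if t1: "etag e = 1"
  proof -
    define q where "q = icp e"
    from J t1 have D: "q < 5 \<or> (4 < q \<and> (q mod 9 = 5 \<or> q mod 9 = 6 \<or> q mod 9 = 7) \<and>
       E (\<lambda>u. IC u (fst (prod_decode (q div 9)))) \<and> E (\<lambda>u. IC u (snd (prod_decode (q div 9)))))
     \<or> (4 < q \<and> q mod 9 = 8 \<and> E (\<lambda>u. IC u (q div 9)))"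
    proof -
      from J t1 have "JG1 E e" unfolding JG_def by simp
      then show ?thesis unfolding JG1_def q_def .
    qed
    then have "q \<in> range code"
    proof (elim disjE)
      assume "q < 5"
      then have "q = code RZero \<or> q = code RSucc \<or> q = code RFst \<or> q = code RSnd \<or> q = code ROrc" by auto
      then show ?thesis by blast
    next
      assume "4 < q \<and> (q mod 9 = 5 \<or> q mod 9 = 6 \<or> q mod 9 = 7) \<and>
        E (\<lambda>u. IC u (fst (prod_decode (q div 9)))) \<and> E (\<lambda>u. IC u (snd (prod_decode (q div 9))))"
      then have h: "4 < q" "q mod 9 = 5 \<or> q mod 9 = 6 \<or> q mod 9 = 7"
        "E (\<lambda>u. IC u (fst (prod_decode (q div 9))))" "E (\<lambda>u. IC u (snd (prod_decode (q div 9))))" by auto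
      from H[OF h(3)] obtain u where "IC u (fst (prod_decode (q div 9)))" "sem u" by blast
      then obtain A where A: "fst (prod_decode (q div 9)) = code A" using IC_sem by blast
      from H[OF h(4)] obtain u where "IC u (snd (prod_decode (q div 9)))" "sem u" by blast
      then obtain B where B: "snd (prod_decode (q div 9)) = code B" using IC_sem by blast
      have k: "q div 9 = prod_encode (code A, code B)" using A B by (metis prod.collapse prod_decode_inverse)
      from h(2) show ?thesis
      proof (elim disjE)
        assume "q mod 9 = 5" then have "q = code (RComp A B)" using k p9[of q] by simp
        then show ?thesis by blast
      next
        assume "q mod 9 = 6" then have "q = code (RPair A B)" using k p9[of q] by simp
        then show ?thesis by blast
      next
        assume "q mod 9 = 7" then have "q = code (RRec A B)" using k p9[of q] by simp
        then show ?thesis by blast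
      qed
    next
      assume "4 < q \<and> q mod 9 = 8 \<and> E (\<lambda>u. IC u (q div 9))"
      then have h: "4 < q" "q mod 9 = 8" "E (\<lambda>u. IC u (q div 9))" by auto
      from H[OF h(3)] obtain u where "IC u (q div 9)" "sem u" by blast
      then obtain A where A: "q div 9 = code A" using IC_sem by blast
      have "q = code (RMu A)" using A h(2) p9[of q] by simp
      then show ?thesis by blast
    qed
    then show ?thesis unfolding q_def .
  qed
  show ?thesis unfolding sem_def using ev0 ic ob_p_x_y_def by auto
qed



definition ES :: "nat set \<Rightarrow> (nat \<Rightarrow> bool) \<Rightarrow> bool" where
  "ES S R \<longleftrightarrow> (\<exists>u\<in>S. R u)"

definition validL :: "nat list \<Rightarrow> bool" where
  "validL L \<longleftrightarrow> (\<forall>i<length L. JG (ES (set (take i L))) (L ! i))"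

lemma JG0_mono: assumes M: "\<And>R R'. E R \<Longrightarrow> (\<And>u. R u \<Longrightarrow> R' u) \<Longrightarrow> E' R'"
  shows "JG0 E e \<Longrightarrow> JG0 E' e"
  unfolding JG0_def
  apply (elim disjE)
  apply (rule disjI1; assumption)
  apply (rule disjI2, rule disjI1; assumption)
  apply (rule disjI2, rule disjI2, rule disjI1; assumption)
  apply (rule disjI2, rule disjI2, rule disjI2, rule disjI1; assumption)
  apply (rule disjI2, rule disjI2, rule disjI2, rule disjI2, rule disjI1; assumption)
  apply (rule disjI2, rule disjI2, rule disjI2, rule disjI2, rule disjI2, rule disjI1; assumption)
  apply (rule disjI2, rule disjI2, rule disjI2, rule disjI2, rule disjI2, rule disjI2, rule disjI1)
  apply (elim conjE, intro conjI, assumption, assumption)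
  apply (erule M, elim conjE, intro conjI, assumption, erule M, assumption)
  apply (rule disjI2, rule disjI2, rule disjI2, rule disjI2, rule disjI2, rule disjI2, rule disjI2, rule disjI1)
  apply (elim conjE, intro conjI, assumption, assumption)
  apply (erule M, elim conjE, intro conjI, assumption, erule M, assumption)
  apply (rule disjI2, rule disjI2, rule disjI2, rule disjI2, rule disjI2, rule disjI2, rule disjI2, rule disjI2, rule disjI1)
  apply (elim conjE, intro conjI, assumption, assumption, assumption)
  apply (erule M, assumption)
  apply (rule disjI2, rule disjI2, rule disjI2, rule disjI2, rule disjI2, rule disjI2, rule disjI2, rule disjI2, rule disjI2, rule disjI1)
  apply (elim conjE, intro conjI, assumption, assumption, assumption)
  apply (erule M, elim conjE, intro conjI, assumption, erule M, assumption)
  apply (rule disjI2, rule disjI2, rule disjI2, rule disjI2, rule disjI2, rule disjI2, rule disjI2, rule disjI2, rule disjI2, rule disjI2)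
  apply (elim conjE, intro conjI, assumption, assumption)
  apply (erule M, assumption)
  apply (intro allI impI)
  apply (erule allE, erule impE, assumption)
  apply (erule M, assumption)
  done

lemma JG1_mono: assumes M: "\<And>R R'. E R \<Longrightarrow> (\<And>u. R u \<Longrightarrow> R' u) \<Longrightarrow> E' R'"
  shows "JG1 E e \<Longrightarrow> JG1 E' e"
  unfolding JG1_def
  apply (elim disjE)
  apply (rule disjI1; assumption)
  apply (rule disjI2, rule disjI1)
  apply (elim conjE, intro conjI, assumption, assumption)
  apply (erule M, assumption)
  apply (erule M, assumption)
  apply (rule disjI2, rule disjI2)
  apply (elim conjE, intro conjI, assumption, assumption)
  apply (erule M, assumption)
  done

lemma JG_mono: "JG (ES S) e \<Longrightarrow> S \<subseteq> S' \<Longrightarrow> JG (ES S') e"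
proof -
  assume h: "JG (ES S) e" "S \<subseteq> S'"
  have M: "ES S' R'" if "ES S R" "\<And>u. R u \<Longrightarrow> R' u" for R R'
    using that h(2) unfolding ES_def by blast
  have A: "JG0 (ES S') e" if "JG0 (ES S) e"
  proof (rule JG0_mono[where E="ES S" and E'="ES S'"])
    fix R R' assume "ES S R" "\<And>u. R u \<Longrightarrow> R' u" then show "ES S' R'" by (rule M)
  next
    show "JG0 (ES S) e" by (rule that)
  qed
  have B: "JG1 (ES S') e" if "JG1 (ES S) e"
  proof (rule JG1_mono[where E="ES S" and E'="ES S'"])
    fix R R' assume "ES S R" "\<And>u. R u \<Longrightarrow> R' u" then show "ES S' R'" by (rule M)
  next
    show "JG1 (ES S) e" by (rule that)
  qed
  show ?thesis using h(1) A B unfolding JG_def by blast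
qed

lemma validL_sound_aux: "validL L \<Longrightarrow> i < length L \<Longrightarrow> sem (L ! i)"
proof (induction i rule: less_induct)
  case (less i)
  have J: "JG (ES (set (take i L))) (L ! i)" using less.prems unfolding validL_def by blast
  show ?case
  proof (rule JG_sound[OF J])
    fix R assume "ES (set (take i L)) R"
    then obtain u where u: "u \<in> set (take i L)" "R u" unfolding ES_def by blast
    then obtain j where j: "j < length (take i L)" "u = take i L ! j" by (metis in_set_conv_nth)
    then have "j < i" "u = L ! j" by auto
    then have "sem u" using less.IH less.prems by auto
    then show "\<exists>u. R u \<and> sem u" using u by blast
  qed
qed

lemma validL_sound: "validL L \<Longrightarrow> u \<in> set L \<Longrightarrow> sem u"
  by (metis in_set_conv_nth validL_sound_aux)

lemma validL_Nil[simp]: "validL []" by (simp add: validL_def)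

lemma validL_append: "validL L1 \<Longrightarrow> validL L2 \<Longrightarrow> validL (L1 @ L2)"
  unfolding validL_def
proof (intro allI impI)
  fix i assume h1: "\<forall>i<length L1. JG (ES (set (take i L1))) (L1 ! i)"
    and h2: "\<forall>i<length L2. JG (ES (set (take i L2))) (L2 ! i)" and i: "i < length (L1 @ L2)"
  show "JG (ES (set (take i (L1 @ L2)))) ((L1 @ L2) ! i)"
  proof (cases "i < length L1")
    case True then show ?thesis using h1 by (simp add: nth_append)
  next
    case False
    define j where "j = i - length L1"
    have j: "j < length L2" "i = length L1 + j" using False i j_def by auto
    have "JG (ES (set (take j L2))) (L2 ! j)" using h2 j by blast
    moreover have "set (take j L2) \<subseteq> set (take i (L1 @ L2))" using j by auto
    ultimately show ?thesis using JG_mono j by (simp add: nth_append)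
  qed
qed

lemma validL_snoc: "validL L \<Longrightarrow> JG (ES (set L)) e \<Longrightarrow> validL (L @ [e])"
  unfolding validL_def by (auto simp: nth_append less_Suc_eq)

lemma validL_combine:
  "(\<forall>m<(n::nat). \<exists>L. validL L \<and> (\<exists>v\<in>set L. T m v)) \<Longrightarrow> \<exists>L. validL L \<and> (\<forall>m<n. \<exists>v\<in>set L. T m v)"
proof (induction n)
  case 0 then show ?case using validL_Nil by blast
next
  case (Suc n)
  then obtain L1 where L1: "validL L1" "\<forall>m<n. \<exists>v\<in>set L1. T m v" by (meson less_SucI)
  from Suc.prems obtain L2 where L2: "validL L2" "\<exists>v\<in>set L2. T n v" by blast
  have "validL (L1 @ L2)" using L1 L2 validL_append by blast
  moreover have "\<forall>m<Suc n. \<exists>v\<in>set (L1 @ L2). T m v" using L1 L2 less_Suc_eq by auto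
  ultimately show ?case by blast
qed

lemma ES_I: "u \<in> S \<Longrightarrow> R u \<Longrightarrow> ES S R" by (auto simp: ES_def)

lemma JG_ic2: assumes "mkic (code A) \<in> S" "mkic (code B) \<in> S" "k = prod_encode (code A, code B)"
  "c = 5 \<or> c = 6 \<or> c = 7"
  shows "JG (ES S) (mkic (c + 9 * k))"
proof -
  have "ES S (\<lambda>u. IC u (code A))" by (rule ES_I[OF assms(1)]) (simp add: IC_def)
  moreover have "ES S (\<lambda>u. IC u (code B))" by (rule ES_I[OF assms(2)]) (simp add: IC_def)
  ultimately show ?thesis using assms(3,4) unfolding JG_def JG1_def by auto
qed

lemma JG_ic1: assumes "mkic (code A) \<in> S" shows "JG (ES S) (mkic (8 + 9 * code A))"
proof -
  have "ES S (\<lambda>u. IC u (code A))" by (rule ES_I[OF assms(1)]) (simp add: IC_def)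
  then show ?thesis unfolding JG_def JG1_def by auto
qed

lemma code_complete: "\<exists>L. validL L \<and> mkic (code P) \<in> set L"
proof (induction P)
  case RZero
  have "validL [mkic 0]" using validL_snoc[of "[]" "mkic 0"] by (simp add: JG_def JG1_def)
  then show ?case by auto
next
  case RSucc
  have "validL [mkic 1]" using validL_snoc[of "[]" "mkic 1"] by (simp add: JG_def JG1_def)
  then show ?case by auto
next
  case RFst
  have "validL [mkic 2]" using validL_snoc[of "[]" "mkic 2"] by (simp add: JG_def JG1_def)
  then show ?case by auto
next
  case RSnd
  have "validL [mkic 3]" using validL_snoc[of "[]" "mkic 3"] by (simp add: JG_def JG1_def)
  then show ?case by auto
next
  case ROrc
  have "validL [mkic 4]" using validL_snoc[of "[]" "mkic 4"] by (simp add: JG_def JG1_def)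
  then show ?case by auto
next
  case (RComp A B)
  then obtain LA LB where h: "validL LA" "mkic (code A) \<in> set LA" "validL LB" "mkic (code B) \<in> set LB" by blast
  have "JG (ES (set (LA @ LB))) (mkic (5 + 9 * prod_encode (code A, code B)))"
    by (rule JG_ic2[of A _ B]) (use h in auto)
  then have "validL ((LA @ LB) @ [mkic (code (RComp A B))])" using h by (intro validL_snoc validL_append) auto
  then show ?case by auto
next
  case (RPair A B)
  then obtain LA LB where h: "validL LA" "mkic (code A) \<in> set LA" "validL LB" "mkic (code B) \<in> set LB" by blast
  have "JG (ES (set (LA @ LB))) (mkic (6 + 9 * prod_encode (code A, code B)))"
    by (rule JG_ic2[of A _ B]) (use h in auto)
  then have "validL ((LA @ LB) @ [mkic (code (RPair A B))])" using h by (intro validL_snoc validL_append) auto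
  then show ?case by auto
next
  case (RRec A B)
  then obtain LA LB where h: "validL LA" "mkic (code A) \<in> set LA" "validL LB" "mkic (code B) \<in> set LB" by blast
  have "JG (ES (set (LA @ LB))) (mkic (7 + 9 * prod_encode (code A, code B)))"
    by (rule JG_ic2[of A _ B]) (use h in auto)
  then have "validL ((LA @ LB) @ [mkic (code (RRec A B))])" using h by (intro validL_snoc validL_append) auto
  then show ?case by auto
next
  case (RMu A)
  then obtain LA where h: "validL LA" "mkic (code A) \<in> set LA" by blast
  have "JG (ES (set LA)) (mkic (8 + 9 * code A))" by (rule JG_ic1) (use h in auto)
  then have "validL (LA @ [mkic (code (RMu A))])" using h by (intro validL_snoc) auto
  then show ?case by auto
qed

lemma single_valid: "JG (ES {}) e \<Longrightarrow> \<exists>L. validL L \<and> e \<in> set L"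
  using validL_snoc[of "[]" e] by auto

lemma JG_C: assumes "mkev ob (code B) x y \<in> S" "mkev ob (code A) y z \<in> S"
  shows "JG (ES S) (mkev ob (code (RComp A B)) x z)"
proof -
  have "ES S (\<lambda>u. EV u ob (code B) x \<and> ES S (\<lambda>u'. EV u' ob (code A) (ey u) \<and> ey u' = z))"
    by (rule ES_I[OF assms(1)]) (auto simp: EV_def intro: ES_I[OF assms(2)])
  then show ?thesis unfolding JG_def JG0_def by simp
qed

lemma JG_P: assumes "mkev ob (code A) x y \<in> S" "mkev ob (code B) x z \<in> S"
  shows "JG (ES S) (mkev ob (code (RPair A B)) x (prod_encode (y, z)))"
proof -
  have "ES S (\<lambda>u. EV u ob (code A) x \<and> ES S (\<lambda>u'. EV u' ob (code B) x \<and> prod_encode (y, z) = prod_encode (ey u, ey u')))"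
    by (rule ES_I[OF assms(1)]) (auto simp: EV_def intro: ES_I[OF assms(2)])
  then show ?thesis unfolding JG_def JG0_def by simp
qed

lemma JG_R0: assumes "mkev ob (code A) x y \<in> S" "prod_decode z = (x, 0)"
  shows "JG (ES S) (mkev ob (code (RRec A B)) z y)"
proof -
  have "ES S (\<lambda>u. EV u ob (code A) x \<and> ey u = y)"
    by (rule ES_I[OF assms(1)]) (auto simp: EV_def)
  then show ?thesis using assms(2) unfolding JG_def JG0_def by simp
qed

lemma JG_RS: assumes "mkev ob (code (RRec A B)) (prod_encode (x, n)) r \<in> S"
   "mkev ob (code B) (prod_encode (x, prod_encode (n, r))) y \<in> S" "prod_decode z = (x, Suc n)"
  shows "JG (ES S) (mkev ob (code (RRec A B)) z y)"
proof -
  have "ES S (\<lambda>u. EV u ob (code (RRec A B)) (prod_encode (x, n)) \<and>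
      ES S (\<lambda>u'. EV u' ob (code B) (prod_encode (x, prod_encode (n, ey u))) \<and> ey u' = y))"
    by (rule ES_I[OF assms(1)]) (auto simp: EV_def intro: ES_I[OF assms(2)])
  then show ?thesis using assms(3) unfolding JG_def JG0_def by simp
qed

lemma JG_M: assumes "mkev ob (code A) (prod_encode (x, n)) 0 \<in> S"
   "\<forall>m<n. \<exists>v\<in>S. \<exists>k. v = mkev ob (code A) (prod_encode (x, m)) (Suc k)"
  shows "JG (ES S) (mkev ob (code (RMu A)) x n)"
proof -
  have "ES S (\<lambda>u. EV u ob (code A) (prod_encode (x, n)) \<and> ey u = 0)"
    by (rule ES_I[OF assms(1)]) (auto simp: EV_def)
  moreover have "\<forall>m<n. ES S (\<lambda>u. EV u ob (code A) (prod_encode (x, m)) \<and> ey u \<noteq> 0)"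
    using assms(2) unfolding ES_def EV_def by force
  ultimately show ?thesis unfolding JG_def JG0_def by simp
qed

lemma ev_complete: "ev Q P x y \<Longrightarrow> Q = orcn ob \<Longrightarrow> \<exists>L. validL L \<and> mkev ob (code P) x y \<in> set L"
proof (induction rule: ev.induct)
  case (evZ x) show ?case by (rule single_valid) (simp add: JG_def JG0_def)
next
  case (evS x) show ?case by (rule single_valid) (simp add: JG_def JG0_def)
next
  case (evF x) show ?case by (rule single_valid) (simp add: JG_def JG0_def)
next
  case (evN x) show ?case by (rule single_valid) (simp add: JG_def JG0_def)
next
  case (evO x b)
  then have "lvalid x ob" "(lnth ob x \<noteq> 0) = b" by (auto simp: orcn_def split: if_splits)
  then show ?case by (intro single_valid) (simp add: JG_def JG0_def)
next
  case (evC g x y f z)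
  then obtain L1 L2 where h: "validL L1" "mkev ob (code g) x y \<in> set L1" "validL L2" "mkev ob (code f) y z \<in> set L2" by blast
  have "JG (ES (set (L1 @ L2))) (mkev ob (code (RComp f g)) x z)" by (rule JG_C) (use h in auto)
  then have "validL ((L1 @ L2) @ [mkev ob (code (RComp f g)) x z])" using h by (intro validL_snoc validL_append)
  then show ?case by auto
next
  case (evP f x y g z)
  then obtain L1 L2 where h: "validL L1" "mkev ob (code f) x y \<in> set L1" "validL L2" "mkev ob (code g) x z \<in> set L2" by blast
  have "JG (ES (set (L1 @ L2))) (mkev ob (code (RPair f g)) x (prod_encode (y, z)))" by (rule JG_P) (use h in auto)
  then have "validL ((L1 @ L2) @ [mkev ob (code (RPair f g)) x (prod_encode (y, z))])" using h by (intro validL_snoc validL_append)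
  then show ?case by auto
next
  case (evR0 z x f y g)
  then obtain L1 where h: "validL L1" "mkev ob (code f) x y \<in> set L1" by blast
  have "JG (ES (set L1)) (mkev ob (code (RRec f g)) z y)" by (rule JG_R0) (use h evR0.hyps(1) in auto)
  then have "validL (L1 @ [mkev ob (code (RRec f g)) z y])" using h by (intro validL_snoc)
  then show ?case by auto
next
  case (evRS z x n f g r y)
  then obtain L1 L2 where h: "validL L1" "mkev ob (code (RRec f g)) (prod_encode (x, n)) r \<in> set L1"
     "validL L2" "mkev ob (code g) (prod_encode (x, prod_encode (n, r))) y \<in> set L2" by blast
  have "JG (ES (set (L1 @ L2))) (mkev ob (code (RRec f g)) z y)" by (rule JG_RS) (use h evRS.hyps(1) in auto)
  then have "validL ((L1 @ L2) @ [mkev ob (code (RRec f g)) z y])" using h by (intro validL_snoc validL_append)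
  then show ?case by auto
next
  case (evM f x n)
  then obtain L1 where L1: "validL L1" "mkev ob (code f) (prod_encode (x, n)) 0 \<in> set L1" by blast
  have "\<forall>m<n. \<exists>L. validL L \<and> (\<exists>v\<in>set L. \<exists>k. v = mkev ob (code f) (prod_encode (x, m)) (Suc k))"
    using evM by blast
  from validL_combine[OF this] obtain L2 where L2: "validL L2"
    "\<forall>m<n. \<exists>v\<in>set L2. \<exists>k. v = mkev ob (code f) (prod_encode (x, m)) (Suc k)" by blast
  have "JG (ES (set (L1 @ L2))) (mkev ob (code (RMu f)) x n)" by (rule JG_M) (use L1 L2 in auto)
  then have "validL ((L1 @ L2) @ [mkev ob (code (RMu f)) x n])" using L1 L2 by (intro validL_snoc validL_append)
  then show ?case by auto
qed



definition valid :: "nat \<Rightarrow> bool" where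
  "valid c \<longleftrightarrow> (\<forall>i<c. lvalid i c \<longrightarrow> JG (\<lambda>R. \<exists>j<i. R (lnth c j)) (lnth c i))"

lemma ES_take: "i \<le> length L \<Longrightarrow> (\<lambda>R. \<exists>j<i. R (lnth (list_encode L) j)) = ES (set (take i L))"
proof (rule ext)
  fix R assume i: "i \<le> length L"
  show "(\<exists>j<i. R (lnth (list_encode L) j)) = ES (set (take i L)) R"
    unfolding ES_def
  proof
    assume "\<exists>j<i. R (lnth (list_encode L) j)"
    then obtain j where j: "j < i" "R (lnth (list_encode L) j)" by blast
    then have "lnth (list_encode L) j = take i L ! j" using i by (simp add: lnth_enc)
    moreover have "take i L ! j \<in> set (take i L)" using j i by (intro nth_mem) simp
    ultimately show "\<exists>u\<in>set (take i L). R u" using j by metis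
  next
    assume "\<exists>u\<in>set (take i L). R u"
    then obtain u where u: "u \<in> set (take i L)" "R u" by blast
    then obtain j where j: "j < length (take i L)" "take i L ! j = u" by (meson in_set_conv_nth)
    then have "j < i" "lnth (list_encode L) j = u" using i by (simp_all add: lnth_enc)
    then show "\<exists>j<i. R (lnth (list_encode L) j)" using u by blast
  qed
qed

lemma valid_enc: "valid (list_encode L) \<longleftrightarrow> validL L"
  unfolding valid_def validL_def
proof
  assume h: "\<forall>i<list_encode L. lvalid i (list_encode L) \<longrightarrow> JG (\<lambda>R. \<exists>j<i. R (lnth (list_encode L) j)) (lnth (list_encode L) i)"
  show "\<forall>i<length L. JG (ES (set (take i L))) (L ! i)"
  proof (intro allI impI)
    fix i assume i: "i < length L"
    then have "i < list_encode L" using length_le_enc[of L] by linarith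
    then have "JG (\<lambda>R. \<exists>j<i. R (lnth (list_encode L) j)) (lnth (list_encode L) i)" using h i lvalid_enc by blast
    then show "JG (ES (set (take i L))) (L ! i)" using i by (simp add: ES_take lnth_enc)
  qed
next
  assume h: "\<forall>i<length L. JG (ES (set (take i L))) (L ! i)"
  show "\<forall>i<list_encode L. lvalid i (list_encode L) \<longrightarrow> JG (\<lambda>R. \<exists>j<i. R (lnth (list_encode L) j)) (lnth (list_encode L) i)"
  proof (intro allI impI)
    fix i assume "i < list_encode L" "lvalid i (list_encode L)"
    then have i: "i < length L" using lvalid_enc by blast
    then show "JG (\<lambda>R. \<exists>j<i. R (lnth (list_encode L) j)) (lnth (list_encode L) i)"
      using h by (simp add: ES_take lnth_enc)
  qed
qed

lemma valid_sound: "valid c \<Longrightarrow> lvalid j c \<Longrightarrow> sem (lnth c j)"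
proof -
  assume "valid c" "lvalid j c"
  then have "validL (list_decode c)" "j < length (list_decode c)"
    using valid_enc[of "list_decode c"] lvalid_enc[of j "list_decode c"] by simp_all
  then have "sem (list_decode c ! j)" by (rule validL_sound_aux)
  then show ?thesis using lnth_enc[of j "list_decode c"] \<open>j < length (list_decode c)\<close> by simp
qed

lemma valid_complete: "validL L \<Longrightarrow> u \<in> set L \<Longrightarrow> \<exists>c. valid c \<and> (\<exists>j<c. lvalid j c \<and> lnth c j = u)"
proof -
  assume "validL L" "u \<in> set L"
  then obtain j where "j < length L" "L ! j = u" by (metis in_set_conv_nth)
  moreover have "j < list_encode L" using calculation length_le_enc[of L] by linarith
  ultimately show ?thesis using valid_enc[of L] \<open>validL L\<close> lvalid_enc[of j L] lnth_enc[of j L]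
    by (intro exI[of _ "list_encode L"]) auto
qed

lemma t_JG1c: "comput (\<lambda>z. of_bool (JG1 (\<lambda>R. \<exists>j<snd (prod_decode z). R (lnth (fst (prod_decode z)) j)) (lnth (fst (prod_decode z)) (snd (prod_decode z)))))"
  unfolding JG1_def IC_def
  by (intro t_ball t_imp t_lvalid t_or t_and t_eq t_less t_le t_not t_bex t_etag t_eo t_ep t_ea t_ey t_icp
     t_lnth t_mod9 t_div9 t_fst t_snd t_pair t_sub t_Suc t_const t_id)

lemma t_JG0c: "comput (\<lambda>z. of_bool (JG0 (\<lambda>R. \<exists>j<snd (prod_decode z). R (lnth (fst (prod_decode z)) j)) (lnth (fst (prod_decode z)) (snd (prod_decode z)))))"
  unfolding JG0_def EV_def
  apply (intro t_or)
  apply (intro t_ball t_imp t_lvalid t_or t_and t_eq t_less t_le t_not t_bex t_etag t_eo t_ep t_ea t_ey t_icp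
     t_lnth t_mod9 t_div9 t_fst t_snd t_pair t_sub t_Suc t_const t_id)+
  done

lemma t_JGc: "comput (\<lambda>z. of_bool (JG (\<lambda>R. \<exists>j<snd (prod_decode z). R (lnth (fst (prod_decode z)) j)) (lnth (fst (prod_decode z)) (snd (prod_decode z)))))"
  unfolding JG_def
  by (intro t_or t_and t_eq t_etag t_lnth t_fst t_snd t_id t_const t_JG0c t_JG1c)

lemma t_valid0: "comput (\<lambda>c. of_bool (valid c))"
  unfolding valid_def
  by (intro t_ball t_imp t_lvalid t_fst t_snd t_id t_JGc)

lemma t_valid[intro!]: "comput a \<Longrightarrow> comput (\<lambda>x. of_bool (valid (a x)))"
  using t_comp[OF t_valid0] by blast



declare dec.simps[simp del]

primrec addc :: "nat \<Rightarrow> rf" where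
  "addc 0 = RPair RFst RSnd"
| "addc (Suc c) = RComp RSucc (addc c)"

lemma ev_addc: "ev Q (addc c) x (x + c)"
proof (induction c)
  case 0
  have "ev Q (RPair RFst RSnd) x (prod_encode (fst (prod_decode x), snd (prod_decode x)))"
    by (intro ev.intros)
  then show ?case by simp
next
  case (Suc c)
  then show ?case using ev.evC[OF Suc ev.evS] by simp
qed

definition Dc :: "rf \<Rightarrow> nat \<Rightarrow> rf" where
  "Dc Pf c = RMu (RComp (RRec (RComp RSucc RZero) RZero) (RPair RZero (RComp ROrc (RComp (addc c) (RComp Pf RFst)))))"

definition addcode :: "nat \<Rightarrow> nat" where
  "addcode k = 5 + 9 * prod_encode (1, k)"

lemma code_addc: "code (addc c) = (addcode ^^ c) (code (RPair RFst RSnd))"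
  by (induction c) (simp_all add: addcode_def)

lemma t_addcode: "comput addcode"
  unfolding addcode_def by (intro t_add t_mult t_pair t_const t_id)

lemma code_Dc: "code (Dc Pf c) = 8 + 9 * (5 + 9 * prod_encode (code (RRec (RComp RSucc RZero) RZero),
   6 + 9 * prod_encode (0, 5 + 9 * prod_encode (4, 5 + 9 * prod_encode ((addcode ^^ c) (code (RPair RFst RSnd)),
      5 + 9 * prod_encode (code Pf, 2))))))"
  by (simp add: Dc_def code_addc)

lemma t_codeDc: "comput (\<lambda>c. code (Dc Pf c))"
  unfolding code_Dc
  by (intro t_add t_mult t_pair t_const t_iter t_addcode t_id)

lemma ev_inner:
  assumes hf: "\<And>Q x. ev Q Pf x (f x)"
  shows "ev (set_orc X) (RComp (RRec (RComp RSucc RZero) RZero) (RPair RZero (RComp ROrc (RComp (addc c) (RComp Pf RFst))))) w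
     (if f (fst (prod_decode w)) + c \<in> X then 0 else 1)"
proof -
  let ?b = "f (fst (prod_decode w)) + c \<in> X"
  have e1: "ev (set_orc X) (RComp (addc c) (RComp Pf RFst)) w (f (fst (prod_decode w)) + c)"
    by (intro ev.evC[OF ev.evC[OF ev.evF hf]] ev_addc)
  have e2: "ev (set_orc X) (RComp ROrc (RComp (addc c) (RComp Pf RFst))) w (of_bool ?b)"
    by (rule ev.evC[OF e1]) (rule ev.evO, simp add: set_orc_def)
  have e3: "ev (set_orc X) (RPair RZero (RComp ROrc (RComp (addc c) (RComp Pf RFst)))) w (prod_encode (0, of_bool ?b))"
    by (rule ev.evP[OF ev.evZ e2])
  have r0: "ev (set_orc X) (RRec (RComp RSucc RZero) RZero) (prod_encode (0, 0)) 1"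
    by (rule ev.evR0[of _ 0]) (auto intro: ev.evC[OF ev.evZ ev.evS, simplified])
  have e4: "ev (set_orc X) (RRec (RComp RSucc RZero) RZero) (prod_encode (0, of_bool ?b)) (if ?b then 0 else 1)"
  proof (cases ?b)
    case True
    have "ev (set_orc X) (RRec (RComp RSucc RZero) RZero) (prod_encode (0, Suc 0)) 0"
      by (rule ev.evRS[of _ 0 0 _ _ _ 1]) (use r0 in \<open>auto intro: ev.evZ\<close>)
    then show ?thesis using True by simp
  next
    case False then show ?thesis using r0 by simp
  qed
  show ?thesis by (rule ev.evC[OF e3 e4])
qed

lemma Dc_sem:
  assumes hf: "\<And>Q x. ev Q Pf x (f x)"
  shows "(\<exists>y. ev (set_orc X) (Dc Pf c) x y) \<longleftrightarrow> f x + c \<in> X"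
proof
  assume "\<exists>y. ev (set_orc X) (Dc Pf c) x y"
  then obtain y where "ev (set_orc X) (Dc Pf c) x y" by blast
  then have "ev (set_orc X) (RComp (RRec (RComp RSucc RZero) RZero) (RPair RZero (RComp ROrc (RComp (addc c) (RComp Pf RFst))))) (prod_encode (x, y)) 0"
    unfolding Dc_def by (rule evME)
  from ev_det[OF this ev_inner[OF hf]] show "f x + c \<in> X" by (simp split: if_splits)
next
  assume h: "f x + c \<in> X"
  have "ev (set_orc X) (RComp (RRec (RComp RSucc RZero) RZero) (RPair RZero (RComp ROrc (RComp (addc c) (RComp Pf RFst))))) (prod_encode (x, 0)) 0"
    using ev_inner[OF hf, of X c "prod_encode (x, 0)"] h by simp
  then have "ev (set_orc X) (Dc Pf c) x 0" unfolding Dc_def by (rule ev.evM) simp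
  then show "\<exists>y. ev (set_orc X) (Dc Pf c) x y" by blast
qed

lemma jump_Dc:
  assumes hf: "\<And>Q x. ev Q Pf x (f x)"
  shows "code (Dc Pf c) \<in> jump X \<longleftrightarrow> f (code (Dc Pf c)) + c \<in> X"
  unfolding jump_def phi_def decode_code using Dc_sem[OF hf] by simp

lemma str_code_enc: "str_code \<sigma> = list_encode (map of_bool \<sigma>)" by (simp add: str_code_def)

lemma lvalid_str: "lvalid i (str_code \<sigma>) \<longleftrightarrow> i < length \<sigma>"
  by (simp add: str_code_def lvalid_enc)

lemma lnth_str: "i < length \<sigma> \<Longrightarrow> lnth (str_code \<sigma>) i = of_bool (\<sigma> ! i)"
  by (simp add: str_code_def lnth_enc)

lemma orcn_str: "orcn (str_code \<sigma>) = str_orc \<sigma>"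
  by (rule ext) (simp add: orcn_def str_orc_def lvalid_str lnth_str)

lemma orcn_0: "orcn 0 = empty_orc"
proof -
  have "orcn (str_code []) = str_orc []" by (rule orcn_str)
  then show ?thesis by (simp add: str_code_def str_orc_def empty_orc_def)
qed

lemma lvalid_mono: "lvalid n l \<Longrightarrow> k \<le> n \<Longrightarrow> lvalid k l"
  using lvalid_enc[of _ "list_decode l"] by simp

lemma length_restr[simp]: "length (restr X l) = l" by (simp add: restr_def)
lemma nth_restr[simp]: "i < l \<Longrightarrow> restr X l ! i = (i \<in> X)" by (simp add: restr_def)

lemma prefix_restr: "l \<le> p \<Longrightarrow> prefix (restr X l) (restr X p)"
  unfolding restr_def prefix_def
proof -
  assume "l \<le> p"
  then have "[0..<p] = [0..<l] @ [l..<p]" by (metis le0 upt_add_eq_append add_diff_inverse_nat not_less le_add_diff_inverse)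
  then show "\<exists>zs. map (\<lambda>i. i \<in> X) [0..<p] = map (\<lambda>i. i \<in> X) [0..<l] @ zs" by auto
qed

lemma join_even: "2 * t \<in> join A B \<longleftrightarrow> t \<in> A"
  unfolding join_def by auto presburger
lemma join_odd: "2 * t + 1 \<in> join A B \<longleftrightarrow> t \<in> B"
  unfolding join_def by auto presburger

lemma str_orc_le: "str_orc (restr B Q) n = Some b \<Longrightarrow> set_orc B n = Some b"
  by (auto simp: str_orc_def set_orc_def split: if_splits)

lemma halting_iff: "i \<in> halting \<longleftrightarrow> (\<exists>y. ev (orcn 0) (decode i) i y)"
  by (simp add: halting_def phi_def orcn_0)

lemma decode_dec: "i \<in> range code \<Longrightarrow> decode i = dec i"
  by (auto simp: dec_code)

lemma code_decode: "code (decode e) \<in> range code" by simp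
lemma dec_code_decode: "dec (code (decode e)) = decode e" by (simp add: dec_code)

lemma mem_enc: "u \<in> set L \<Longrightarrow> \<exists>j<list_encode L. lvalid j (list_encode L) \<and> lnth (list_encode L) j = u"
proof -
  assume "u \<in> set L"
  then obtain j where j: "j < length L" "L ! j = u" by (metis in_set_conv_nth)
  moreover have "j < list_encode L" using j length_le_enc[of L] by linarith
  ultimately show ?thesis using lvalid_enc[of j L] lnth_enc[of j L] by auto
qed

lemma validL_combine2:
  assumes mono: "\<And>m L L'. T m L \<Longrightarrow> set L \<subseteq> set L' \<Longrightarrow> T m L'"
  shows "(\<forall>m<(n::nat). \<exists>L. validL L \<and> T m L) \<Longrightarrow> \<exists>L. validL L \<and> (\<forall>m<n. T m L)"
proof (induction n)
  case 0 then show ?case using validL_Nil by blast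
next
  case (Suc n)
  then obtain L1 where L1: "validL L1" "\<forall>m<n. T m L1" by (meson less_SucI)
  from Suc.prems obtain L2 where L2: "validL L2" "T n L2" by blast
  have "validL (L1 @ L2)" using L1 L2 validL_append by blast
  moreover have "\<forall>m<Suc n. T m (L1 @ L2)"
    using L1 L2 mono less_Suc_eq by (metis Un_upper1 Un_upper2 set_append)
  ultimately show ?case by blast
qed



definition EVh :: "nat \<Rightarrow> nat \<Rightarrow> bool" where
  "EVh u i \<longleftrightarrow> etag u = 0 \<and> eo u = 0 \<and> ep u = i \<and> ea u = i"

definition Mat :: "nat \<Rightarrow> (nat \<Rightarrow> nat) \<Rightarrow> (nat \<Rightarrow> nat) \<Rightarrow> nat \<Rightarrow> nat \<Rightarrow> nat \<Rightarrow> nat \<Rightarrow> nat \<Rightarrow> nat \<Rightarrow> nat \<Rightarrow> bool" where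
"Mat E qf dc m c oh ov v w s \<longleftrightarrow>
  lvalid (qf c + c) m \<and> ((lnth m (qf c + c) \<noteq> 0 \<and> v \<noteq> 1) \<or> (lnth m (qf c + c) = 0 \<and> v = 1))
  \<and> (\<forall>i<qf c. lvalid i oh)
  \<and> (\<forall>i<qf c. lvalid i ov) \<and> \<not> lvalid (qf c) ov
  \<and> (\<forall>t<qf c. (2 * t < qf c \<longrightarrow> lnth ov (2 * t) = lnth m t) \<and> (2 * t + 1 < qf c \<longrightarrow> lnth ov (2 * t + 1) = lnth oh t))
  \<and> valid w \<and> (\<exists>j<w. lvalid j w \<and> lnth w j = mkev ov E (dc c) v)
  \<and> (\<forall>i<qf c. (lnth oh i \<noteq> 0 \<longrightarrow> ((\<exists>j<w. lvalid j w \<and> EVh (lnth w j) i) \<or> \<not> (valid s \<and> (\<exists>j<s. lvalid j s \<and> lnth s j = mkic i))))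
           \<and> (lnth oh i = 0 \<longrightarrow> ((\<exists>j<w. lvalid j w \<and> lnth w j = mkic i) \<and> \<not> (valid s \<and> (\<exists>j<s. lvalid j s \<and> EVh (lnth s j) i)))))"

definition k1 :: "nat \<Rightarrow> nat" where "k1 k = fst (prod_decode k)"
definition k2 :: "nat \<Rightarrow> nat" where "k2 k = fst (prod_decode (snd (prod_decode k)))"
definition k3 :: "nat \<Rightarrow> nat" where "k3 k = fst (prod_decode (snd (prod_decode (snd (prod_decode k)))))"
definition k4 :: "nat \<Rightarrow> nat" where "k4 k = fst (prod_decode (snd (prod_decode (snd (prod_decode (snd (prod_decode k)))))))"
definition k5 :: "nat \<Rightarrow> nat" where "k5 k = snd (prod_decode (snd (prod_decode (snd (prod_decode (snd (prod_decode k)))))))"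

lemma k_sel: "k1 (prod_encode (c, prod_encode (oh, prod_encode (ov, prod_encode (v, w))))) = c"
  "k2 (prod_encode (c, prod_encode (oh, prod_encode (ov, prod_encode (v, w))))) = oh"
  "k3 (prod_encode (c, prod_encode (oh, prod_encode (ov, prod_encode (v, w))))) = ov"
  "k4 (prod_encode (c, prod_encode (oh, prod_encode (ov, prod_encode (v, w))))) = v"
  "k5 (prod_encode (c, prod_encode (oh, prod_encode (ov, prod_encode (v, w))))) = w"
  by (simp_all add: k1_def k2_def k3_def k4_def k5_def)

definition Matk :: "nat \<Rightarrow> (nat \<Rightarrow> nat) \<Rightarrow> (nat \<Rightarrow> nat) \<Rightarrow> nat \<Rightarrow> nat \<Rightarrow> nat \<Rightarrow> bool" where
  "Matk E qf dc m k s \<longleftrightarrow> Mat E qf dc m (k1 k) (k2 k) (k3 k) (k4 k) (k5 k) s"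

lemma t_k[intro!]: "comput a \<Longrightarrow> comput (\<lambda>x. k1 (a x))" "comput a \<Longrightarrow> comput (\<lambda>x. k2 (a x))"
  "comput a \<Longrightarrow> comput (\<lambda>x. k3 (a x))" "comput a \<Longrightarrow> comput (\<lambda>x. k4 (a x))" "comput a \<Longrightarrow> comput (\<lambda>x. k5 (a x))"
  unfolding k1_def k2_def k3_def k4_def k5_def by (intro t_fst t_snd; assumption)+

lemma t_Matk:
  assumes hq: "comput qf" and hd: "comput dc"
  shows "comput (\<lambda>z. of_bool (Matk E qf dc (fst (prod_decode (fst (prod_decode z)))) (snd (prod_decode (fst (prod_decode z)))) (snd (prod_decode z))))"
proof -
  have tq: "comput a \<Longrightarrow> comput (\<lambda>x. qf (a x))" for a using t_comp[OF hq] by blast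
  have td: "comput a \<Longrightarrow> comput (\<lambda>x. dc (a x))" for a using t_comp[OF hd] by blast
  show ?thesis
    unfolding Matk_def Mat_def EVh_def mkev_def mkic_def
    apply (intro t_and)
    apply (intro t_ball t_imp t_lvalid t_or t_and t_eq t_less t_le t_not t_bex t_etag t_eo t_ep t_ea t_ey t_icp
     t_lnth t_mod9 t_div9 t_fst t_snd t_pair t_sub t_Suc t_add t_mult t_const t_id t_valid t_k tq td)+
    done
qed

lemma Sigma2_of:
  assumes "comput (\<lambda>z. of_bool (Mt (fst (prod_decode (fst (prod_decode z)))) (snd (prod_decode (fst (prod_decode z)))) (snd (prod_decode z))))"
  shows "Sigma 2 {m. \<exists>k. \<forall>s. Mt m k s}"
proof -
  define R0 where "R0 = {z. Mt (fst (prod_decode (fst (prod_decode z)))) (snd (prod_decode (fst (prod_decode z)))) (snd (prod_decode z))}"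
  have "decidable R0" unfolding R0_def by (rule comput_decidable) (simp add: assms)
  then have s0: "Sigma 0 R0" by simp
  define R where "R = {w. \<exists>s. prod_encode (w, s) \<notin> R0}"
  have s1: "Sigma (Suc 0) R" using s0 R_def by auto
  have eq: "{m. \<exists>k. \<forall>s. Mt m k s} = {m. \<exists>k. prod_encode (m, k) \<notin> R}"
    unfolding R_def R0_def by simp
  have "Sigma (Suc (Suc 0)) {m. \<exists>k. prod_encode (m, k) \<notin> R}" using s1 by auto
  then show ?thesis unfolding eq numeral_2_eq_2 .
qed



lemma entry_sound: "valid w \<Longrightarrow> \<exists>j<w. lvalid j w \<and> P (lnth w j) \<Longrightarrow> \<exists>u. P u \<and> sem u"
  using valid_sound by blast

lemma notcode_decode: "i \<notin> range code \<Longrightarrow> i \<in> halting"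
  using halting_iff[of i] decode_notcode[of i] ev.evZ by metis

lemma code_entry: "i \<in> range code \<Longrightarrow> \<exists>s. valid s \<and> (\<exists>j<s. lvalid j s \<and> lnth s j = mkic i)"
proof -
  assume "i \<in> range code"
  then obtain P where "i = code P" by blast
  with code_complete[of P] obtain L where "validL L" "mkic i \<in> set L" by blast
  then show ?thesis using valid_enc mem_enc by blast
qed

lemma code_decode_i: "i \<in> range code \<Longrightarrow> code (decode i) = i"
  by (auto simp: decode_code)

lemma halt_entry: "i \<in> range code \<Longrightarrow> i \<in> halting \<Longrightarrow>
   \<exists>L. validL L \<and> (\<exists>u\<in>set L. EVh u i)"
proof -
  assume c: "i \<in> range code" and "i \<in> halting"
  then obtain y where "ev (orcn 0) (decode i) i y" using halting_iff by blast
  from ev_complete[OF this refl] obtain L where "validL L" "mkev 0 (code (decode i)) i y \<in> set L" by blast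
  moreover have "EVh (mkev 0 (code (decode i)) i y) i" using code_decode_i[OF c] by (simp add: EVh_def)
  ultimately show ?thesis by blast
qed

lemma EVh_sound: "EVh u i \<Longrightarrow> sem u \<Longrightarrow> i \<in> halting"
proof -
  assume "EVh u i" "sem u"
  then have e: "ev (orcn 0) (dec i) i (ey u)" by (simp add: EVh_def sem_def)
  show "i \<in> halting"
  proof (cases "i \<in> range code")
    case True then show ?thesis using e halting_iff decode_dec by metis
  next
    case False then show ?thesis by (rule notcode_decode)
  qed
qed

lemma IC_sound: "lnth s j = mkic i \<Longrightarrow> sem (lnth s j) \<Longrightarrow> i \<in> range code"
  by (simp add: sem_def)

lemma claim_a:
  assumes hPf: "\<And>Q x. ev Q Pf x (f x)"
  and cp: "computes e (join X halting) (jump X)"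
  and mat: "\<forall>s. Mat (code (decode e)) (\<lambda>c. f (code (Dc Pf c))) (\<lambda>c. code (Dc Pf c)) (str_code (restr X l)) c oh ov v w s"
  shows False
proof -
  define d where "d = code (Dc Pf c)"
  define Q where "Q = f d"
  define P where "P = Q + c"
  define B where "B = join X halting"
  define m where "m = str_code (restr X l)"
  have M: "\<And>s. Mat (code (decode e)) (\<lambda>c. f (code (Dc Pf c))) (\<lambda>c. code (Dc Pf c)) m c oh ov v w s"
    using mat m_def by blast
  note M0 = M[of 0, unfolded Mat_def, folded d_def, folded Q_def, folded P_def]
  have Pl: "P < l" using M0 lvalid_str[of P "restr X l"] m_def by simp
  have lm: "lnth m t = of_bool (t \<in> X)" if "t < l" for t using that by (simp add: m_def lnth_str)
  have c1: "(P \<in> X) \<longleftrightarrow> v \<noteq> 1" using M0 lm[OF Pl] by auto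
  have hb: "(lnth oh i \<noteq> 0) \<longleftrightarrow> i \<in> halting" if iQ: "i < Q" for i
  proof
    assume nz: "lnth oh i \<noteq> 0"
    have C: "\<And>s. (\<exists>j<w. lvalid j w \<and> EVh (lnth w j) i) \<or> \<not> (valid s \<and> (\<exists>j<s. lvalid j s \<and> lnth s j = mkic i))"
      using M[unfolded Mat_def, folded d_def, folded Q_def] iQ nz by blast
    show "i \<in> halting"
    proof (cases "\<exists>j<w. lvalid j w \<and> EVh (lnth w j) i")
      case True
      then obtain u where "EVh u i" "sem u" using entry_sound[of w "\<lambda>u. EVh u i"] M0 by blast
      then show ?thesis by (rule EVh_sound)
    next
      case False
      then have "\<not> (\<exists>s. valid s \<and> (\<exists>j<s. lvalid j s \<and> lnth s j = mkic i))" using C by blast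
      then have "i \<notin> range code" using code_entry by blast
      then show ?thesis by (rule notcode_decode)
    qed
  next
    assume hi: "i \<in> halting"
    show "lnth oh i \<noteq> 0"
    proof
      assume z: "lnth oh i = 0"
      have C: "\<And>s. (\<exists>j<w. lvalid j w \<and> lnth w j = mkic i) \<and> \<not> (valid s \<and> (\<exists>j<s. lvalid j s \<and> EVh (lnth s j) i))"
        using M[unfolded Mat_def, folded d_def, folded Q_def] iQ z by blast
      then obtain j where "j < w" "lvalid j w" "lnth w j = mkic i" by blast
      then have ic: "i \<in> range code" using valid_sound[of w j] M0 IC_sound by blast
      from halt_entry[OF ic hi] obtain L where "validL L" "\<exists>u\<in>set L. EVh u i" by blast
      then obtain s where "valid s" "\<exists>j<s. lvalid j s \<and> EVh (lnth s j) i"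
        using valid_enc mem_enc by metis
      then show False using C by blast
    qed
  qed
  have orc: "orcn ov = str_orc (restr B Q)"
  proof (rule ext)
    fix x
    show "orcn ov x = str_orc (restr B Q) x"
    proof (cases "x < Q")
      case False
      then have "\<not> lvalid x ov" using M0 lvalid_mono[of x ov Q] by auto
      then show ?thesis using False by (simp add: orcn_def str_orc_def)
    next
      case True
      have lv: "lvalid x ov" using M0 True by blast
      have "(lnth ov x \<noteq> 0) = (x \<in> B)"
      proof (cases "even x")
        case True
        then obtain t where t: "x = 2 * t" by (metis evenE)
        have "t < Q" "2 * t < Q" using t \<open>x < Q\<close> by auto
        then have "lnth ov (2 * t) = lnth m t" using M0 by blast
        moreover have "t < l" using \<open>t < Q\<close> Pl P_def by linarith
        ultimately show ?thesis using t lm B_def join_even by simp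
      next
        case False
        then obtain t where t: "x = 2 * t + 1" by (metis oddE)
        have "t < Q" "2 * t + 1 < Q" using t \<open>x < Q\<close> by auto
        then have "lnth ov (2 * t + 1) = lnth oh t" using M0 by blast
        then show ?thesis using t hb[OF \<open>t < Q\<close>] B_def join_odd by simp
      qed
      then show ?thesis using True lv by (simp add: orcn_def str_orc_def)
    qed
  qed
  obtain u where u: "u = mkev ov (code (decode e)) d v" "sem u"
    using entry_sound[of w "\<lambda>u. u = mkev ov (code (decode e)) d v"] M0 by blast
  then have "ev (orcn ov) (dec (code (decode e))) d v" by (simp add: sem_def)
  then have "ev (str_orc (restr B Q)) (decode e) d v" using orc dec_code_decode by simp
  then have "ev (set_orc B) (decode e) d v" by (rule ev_mono) (rule str_orc_le)
  moreover have "ev (set_orc B) (decode e) d (if d \<in> jump X then 1 else 0)"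
    using cp B_def unfolding computes_def phi_def by blast
  ultimately have "v = (if d \<in> jump X then 1 else 0)" by (rule ev_det)
  moreover have "d \<in> jump X \<longleftrightarrow> P \<in> X" using jump_Dc[OF hPf] d_def Q_def P_def by simp
  ultimately show False using c1 by (auto split: if_splits)
qed



definition T :: "nat \<Rightarrow> nat list \<Rightarrow> bool" where
  "T i L \<longleftrightarrow> (i \<in> halting \<and> i \<in> range code \<longrightarrow> (\<exists>u\<in>set L. EVh u i)) \<and> (i \<notin> halting \<longrightarrow> mkic i \<in> set L)"

lemma claim_b:
  assumes hPf: "\<And>Q x. ev Q Pf x (f x)"
  and tt: "\<forall>n \<sigma>. length \<sigma> = f n \<longrightarrow> (\<exists>y. phi e (str_orc \<sigma>) n y)"
  shows "\<exists>\<tau>. prefix (restr X l) \<tau> \<and> (\<exists>c oh ov v w. \<forall>s.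
     Mat (code (decode e)) (\<lambda>c. f (code (Dc Pf c))) (\<lambda>c. code (Dc Pf c)) (str_code \<tau>) c oh ov v w s)"
proof -
  define c where "c = l"
  define d where "d = code (Dc Pf c)"
  define Q where "Q = f d"
  define P where "P = Q + c"
  define B where "B = join X halting"
  have "length (restr B Q) = f d" by (simp add: Q_def)
  then obtain v where hv: "phi e (str_orc (restr B Q)) d v" using tt by blast
  define \<tau> where "\<tau> = restr X P @ [v \<noteq> 1]"
  have pre: "prefix (restr X l) \<tau>"
  proof -
    have "prefix (restr X l) (restr X P)" using prefix_restr P_def c_def by simp
    then show ?thesis unfolding \<tau>_def by (metis prefix_append)
  qed
  define m where "m = str_code \<tau>"
  define oh where "oh = str_code (restr halting Q)"
  define ov where "ov = str_code (restr B Q)"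
  have ev0: "ev (orcn ov) (decode e) d v" using hv by (simp add: ov_def orcn_str phi_def)
  have "\<exists>L. validL L \<and> mkev ov (code (decode e)) d v \<in> set L" by (rule ev_complete[OF ev0]) (rule refl)
  then obtain L0 where L0: "validL L0" "mkev ov (code (decode e)) d v \<in> set L0" by blast
  have allT: "\<forall>i<Q. \<exists>L. validL L \<and> T i L"
  proof (intro allI impI)
    fix i assume "i < Q"
    show "\<exists>L. validL L \<and> T i L"
    proof (cases "i \<in> halting")
      case hT: True
      show ?thesis
      proof (cases "i \<in> range code")
        case True
        from halt_entry[OF True hT] obtain L where L: "validL L" "\<exists>u\<in>set L. EVh u i" by (elim exE conjE)
        have "T i L" unfolding T_def using L(2) hT by simp
        then show ?thesis using L(1) by (intro exI conjI)
      next
        case False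
        have "T i []" unfolding T_def using False hT by simp
        then show ?thesis using validL_Nil by blast
      qed
    next
      case False
      then have ic: "i \<in> range code" using notcode_decode by (rule contrapos_np)
      then obtain P' where P': "i = code P'" by (elim rangeE)
      from code_complete[of P'] obtain L where L: "validL L" "mkic (code P') \<in> set L" by (elim exE conjE)
      have "T i L" unfolding T_def using L(2) P' False by simp
      then show ?thesis using L(1) by (intro exI conjI)
    qed
  qed
  have "\<exists>L. validL L \<and> (\<forall>i<Q. T i L)"
  proof (rule validL_combine2[of T, OF _ allT])
    fix m L L' assume "T m L" "set L \<subseteq> set L'"
    then show "T m L'" unfolding T_def by blast
  qed
  then obtain Lh where Lh: "validL Lh" "\<forall>i<Q. T i Lh" by blast
  define w where "w = list_encode (L0 @ Lh)"
  have vw: "valid w" unfolding w_def valid_enc using L0 Lh validL_append by blast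
  have inw: "\<exists>j<w. lvalid j w \<and> lnth w j = u" if "u \<in> set L0 \<or> u \<in> set Lh" for u
    unfolding w_def using mem_enc[of u "L0 @ Lh"] that by auto
  have lP: "lvalid P m" "lnth m P = of_bool (v \<noteq> 1)"
    by (simp_all add: m_def \<tau>_def lvalid_str lnth_str nth_append)
  have mt: "lnth m t = of_bool (t \<in> X)" if "t < P" for t
    using that by (simp add: m_def \<tau>_def lnth_str nth_append)
  have "\<forall>s. Mat (code (decode e)) (\<lambda>c. f (code (Dc Pf c))) (\<lambda>c. code (Dc Pf c)) m c oh ov v w s"
  proof
    fix s
    show "Mat (code (decode e)) (\<lambda>c. f (code (Dc Pf c))) (\<lambda>c. code (Dc Pf c)) m c oh ov v w s"
      unfolding Mat_def d_def[symmetric] Q_def[symmetric] P_def[symmetric]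
    proof (intro conjI)
      show "lvalid P m" by (fact lP(1))
      show "lnth m P \<noteq> 0 \<and> v \<noteq> 1 \<or> lnth m P = 0 \<and> v = 1" using lP(2) by auto
      show "\<forall>i<Q. lvalid i oh" by (simp add: oh_def lvalid_str)
      show "\<forall>i<Q. lvalid i ov" by (simp add: ov_def lvalid_str)
      show "\<not> lvalid Q ov" by (simp add: ov_def lvalid_str)
      show "\<forall>t<Q. (2 * t < Q \<longrightarrow> lnth ov (2 * t) = lnth m t) \<and> (2 * t + 1 < Q \<longrightarrow> lnth ov (2 * t + 1) = lnth oh t)"
      proof (intro allI impI conjI)
        fix t assume "t < Q" "2 * t < Q"
        then have "t < P" using P_def by linarith
        then show "lnth ov (2 * t) = lnth m t"
          using mt \<open>2 * t < Q\<close> by (simp add: ov_def lnth_str B_def join_even)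
      next
        fix t assume "t < Q" "2 * t + 1 < Q"
        then show "lnth ov (2 * t + 1) = lnth oh t"
          by (simp add: ov_def oh_def lnth_str B_def join_odd[simplified])
      qed
      show "valid w" by (fact vw)
      show "\<exists>j<w. lvalid j w \<and> lnth w j = mkev ov (code (decode e)) d v" using inw L0(2) by blast
      show "\<forall>i<Q. (lnth oh i \<noteq> 0 \<longrightarrow> (\<exists>j<w. lvalid j w \<and> EVh (lnth w j) i) \<or>
               \<not> (valid s \<and> (\<exists>j<s. lvalid j s \<and> lnth s j = mkic i))) \<and>
           (lnth oh i = 0 \<longrightarrow> (\<exists>j<w. lvalid j w \<and> lnth w j = mkic i) \<and>
               \<not> (valid s \<and> (\<exists>j<s. lvalid j s \<and> EVh (lnth s j) i)))"
      proof (intro allI impI conjI)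
        fix i assume iQ: "i < Q"
        have ohi: "lnth oh i = of_bool (i \<in> halting)" using iQ by (simp add: oh_def lnth_str)
        have Ti: "T i Lh" using Lh iQ by blast
        {
          assume "lnth oh i \<noteq> 0"
          then have hi: "i \<in> halting" using ohi by simp
          show "(\<exists>j<w. lvalid j w \<and> EVh (lnth w j) i) \<or> \<not> (valid s \<and> (\<exists>j<s. lvalid j s \<and> lnth s j = mkic i))"
          proof (cases "i \<in> range code")
            case True
            then obtain u where "u \<in> set Lh" "EVh u i" using Ti hi T_def by blast
            then show ?thesis using inw by blast
          next
            case False
            then show ?thesis using valid_sound IC_sound by blast
          qed
        next
          assume "lnth oh i = 0"
          then have hi: "i \<notin> halting" using ohi by simp
          then have "mkic i \<in> set Lh" using Ti T_def by blast
          then show "\<exists>j<w. lvalid j w \<and> lnth w j = mkic i" using inw by blast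
        next
          assume "lnth oh i = 0"
          then have hi: "i \<notin> halting" using ohi by simp
          show "\<not> (valid s \<and> (\<exists>j<s. lvalid j s \<and> EVh (lnth s j) i))"
            using valid_sound EVh_sound hi by blast
        }
      qed
    qed
  qed
  then show ?thesis using pre m_def by blast
qed

theorem mainTheorem1:
  assumes "generic 2 X"
  shows "\<not> tt_le (jump X) (join X halting)"
proof
  assume "tt_le (jump X) (join X halting)"
  then obtain e where tt: "tt_functional e" and cp: "computes e (join X halting) (jump X)"
    unfolding tt_le_def by blast
  from tt obtain f where cf: "computable_fun f" and tt': "\<forall>n \<sigma>. length \<sigma> = f n \<longrightarrow> (\<exists>y. phi e (str_orc \<sigma>) n y)"
    unfolding tt_functional_def by blast
  from cf obtain ef where hef: "\<And>n. phi ef empty_orc n (f n)" unfolding computable_fun_def by blast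
  define Pf where "Pf = decode ef"
  have hPf: "\<And>Q x. ev Q Pf x (f x)"
  proof -
    fix Q x
    have "ev empty_orc Pf x (f x)" using hef Pf_def phi_def by simp
    then show "ev Q Pf x (f x)" by (rule ev_mono) (simp add: empty_orc_def)
  qed
  have cfP: "comput f" by (rule computI) (rule hPf)
  define dc where "dc = (\<lambda>c. code (Dc Pf c))"
  define qf where "qf = (\<lambda>c. f (dc c))"
  have cdc: "comput dc" unfolding dc_def by (rule t_codeDc)
  have cqf: "comput qf" unfolding qf_def by (rule t_comp[OF cfP cdc])
  define E where "E = code (decode e)"
  define A where "A = {m. \<exists>k. \<forall>s. Matk E qf dc m k s}"
  have sA: "Sigma 2 A" unfolding A_def by (rule Sigma2_of) (rule t_Matk[OF cqf cdc])
  define S where "S = {\<sigma>. str_code \<sigma> \<in> A}"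
  have sS: "Sigma_strings 2 S" unfolding Sigma_strings_def S_def using sA by blast
  have memS: "\<sigma> \<in> S" if "\<forall>s. Mat E qf dc (str_code \<sigma>) c oh ov v w s" for \<sigma> c oh ov v w
  proof -
    have "\<forall>s. Matk E qf dc (str_code \<sigma>) (prod_encode (c, prod_encode (oh, prod_encode (ov, prod_encode (v, w))))) s"
      using that by (simp add: Matk_def k_sel)
    then show ?thesis unfolding S_def A_def by blast
  qed
  have memS': "\<exists>c oh ov v w. \<forall>s. Mat E qf dc (str_code \<sigma>) c oh ov v w s" if "\<sigma> \<in> S" for \<sigma>
    using that unfolding S_def A_def Matk_def by blast
  from assms sS have "(\<exists>l. restr X l \<in> S) \<or> (\<exists>l. \<forall>\<tau>. prefix (restr X l) \<tau> \<longrightarrow> \<tau> \<notin> S)"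
    unfolding generic_def by blast
  then show False
  proof
    assume "\<exists>l. restr X l \<in> S"
    then obtain l where "restr X l \<in> S" by blast
    from memS'[OF this] obtain c oh ov v w where "\<forall>s. Mat E qf dc (str_code (restr X l)) c oh ov v w s" by blast
    then show False using claim_a[OF hPf cp] unfolding E_def qf_def dc_def by blast
  next
    assume "\<exists>l. \<forall>\<tau>. prefix (restr X l) \<tau> \<longrightarrow> \<tau> \<notin> S"
    then obtain l where l: "\<forall>\<tau>. prefix (restr X l) \<tau> \<longrightarrow> \<tau> \<notin> S" by blast
    from claim_b[OF hPf tt', of X l] obtain \<tau> c oh ov v w where "prefix (restr X l) \<tau>"
      "\<forall>s. Mat E qf dc (str_code \<tau>) c oh ov v w s" unfolding E_def qf_def dc_def by blast
    then show False using l memS by blast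
  qed
qed

end
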